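(* In any finite ELP, if $\mu$ is an optimal policy, then the Lagrangian $\mathcal L_\mu$ with conjugate policy $\mu$ satisfies $$\min_{Q\in\mathcal Q}\max_{\lambda\ge0}\mathcal L_\mu(Q,\lambda)=\max_{\lambda\ge0}\min_{Q\in\mathcal Q}\mathcal L_\mu(Q,\lambda)=J(\mu).$$
   Context: A finite ELP is $(\mathcal S,\mathcal A,P,R,\rho)$ with finite $\mathcal S,\mathcal A$, reward $R:\mathcal S\to\mathbb R$, transitions $P(s'|s,a)$, distribution $\rho$, and nonempty terminal set $\mathcal S_\bot$. Under a policy $\pi$, $S_0$ is a fixed terminal state, $A_t\sim\pi(\cdot|S_t)$, $S_{t+1}\sim P(\cdot|S_t,A_t)$, and $T=\inf\{t\ge1:S_t\in\mathcal S_\bot\}$. ELP conditions: $\mathbb E_\pi[T]<\infty$ for every $\pi$; $P(s'|s,a)=\rho(s')$ for all $s\in\mathcal S_\bot$, all $a,s'$; every state is reachable under some policy. $J(\pi)=\mathbb E_\pi[\sum_{t=1}^TR(S_t)]$; $\mu$ optimal means $J(\mu)=\max_\pi J(\pi)$. $\mathcal Q$ = all functions $\mathcal S\times\mathcal A\to\mathbb R$; $\lambda\ge0$ ranges over functions $\mathcal S\times\mathcal A\to[0,\infty)$. $\mathcal BQ(s,a)=\sum_{s'}P(s'|s,a)\big(R(s')+\mathbf 1[s'\notin\mathcal S_\bot]\max_{a'}Q(s',a')\big)$. $\mathcal L_\pi(Q,\lambda)=\mathbb E_\pi[Q(S_T,A_T)]+\sum_{s,a}\lambda(s,a)(\mathcal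 BQ(s,a)-Q(s,a))$ with $A_T\sim\pi(\cdot|S_T)$. *)

theory Defs
  imports "HOL-Analysis.Analysis"
begin

text \<open>P s a s' is the transition probability P(s'|s,a), R s is the reward,
  rho the restart distribution, Sbot the terminal set.
  A (stationary, stochastic) policy pol s a is pol(a|s).
  An episode is recorded as the list [(S_1,A_1),...,(S_T,A_T)];
  since S_0 is terminal, S_1 is distributed according to rho.\<close>

definition is_policy :: "('s::finite \<Rightarrow> 'a::finite \<Rightarrow> real) \<Rightarrow> bool" where
  "is_policy pol \<longleftrightarrow> (\<forall>s a. 0 \<le> pol s a) \<and> (\<forall>s. (\<Sum>a\<in>UNIV. pol s a) = 1)"

fun steps_prob :: "('s \<Rightarrow> 'a \<Rightarrow> 's \<Rightarrow> real) \<Rightarrow> ('s \<Rightarrow> 'a \<Rightarrow> real) \<Rightarrow> ('s \<times> 'a) list \<Rightarrow> real" where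
  "steps_prob P pol [] = 1"
| "steps_prob P pol [x] = 1"
| "steps_prob P pol ((s,a) # (s',a') # xs) = P s a s' * pol s' a' * steps_prob P pol ((s',a') # xs)"

text \<open>Probability that the first length(xs) state-action pairs of the process are xs.\<close>
fun traj_prob :: "('s \<Rightarrow> 'a \<Rightarrow> 's \<Rightarrow> real) \<Rightarrow> ('s \<Rightarrow> real) \<Rightarrow> ('s \<Rightarrow> 'a \<Rightarrow> real) \<Rightarrow> ('s \<times> 'a) list \<Rightarrow> real" where
  "traj_prob P rho pol [] = 0"
| "traj_prob P rho pol ((s,a) # xs) = rho s * pol s a * steps_prob P pol ((s,a) # xs)"

text \<open>xs is a full episode: all states but the last are non-terminal, the last one is terminal
  (so length xs = T).\<close>
definition stopped :: "'s set \<Rightarrow> ('s \<times> 'a) list \<Rightarrow> bool" where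
  "stopped Sbot xs \<longleftrightarrow> xs \<noteq> [] \<and> fst (last xs) \<in> Sbot \<and> (\<forall>x\<in>set (butlast xs). fst x \<notin> Sbot)"

definition hit_prob :: "('s::finite \<Rightarrow> 'a::finite \<Rightarrow> 's \<Rightarrow> real) \<Rightarrow> ('s \<Rightarrow> real) \<Rightarrow> 's set \<Rightarrow> ('s \<Rightarrow> 'a \<Rightarrow> real) \<Rightarrow> nat \<Rightarrow> real" where
  "hit_prob P rho Sbot pol t = (\<Sum>xs | length xs = t \<and> stopped Sbot xs. traj_prob P rho pol xs)"

definition episode_exp :: "('s::finite \<Rightarrow> 'a::finite \<Rightarrow> 's \<Rightarrow> real) \<Rightarrow> ('s \<Rightarrow> real) \<Rightarrow> 's set \<Rightarrow> ('s \<Rightarrow> 'a \<Rightarrow> real)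
    \<Rightarrow> (('s \<times> 'a) list \<Rightarrow> real) \<Rightarrow> real" where
  "episode_exp P rho Sbot pol f =
     (\<Sum>t. \<Sum>xs | length xs = t \<and> stopped Sbot xs. traj_prob P rho pol xs * f xs)"

definition finite_ELP :: "('s::finite \<Rightarrow> 'a::finite \<Rightarrow> 's \<Rightarrow> real) \<Rightarrow> ('s \<Rightarrow> real) \<Rightarrow> ('s \<Rightarrow> real) \<Rightarrow> 's set \<Rightarrow> bool" where
  "finite_ELP P R rho Sbot \<longleftrightarrow>
     (\<forall>s a s'. 0 \<le> P s a s') \<and> (\<forall>s a. (\<Sum>s'\<in>UNIV. P s a s') = 1) \<and>
     (\<forall>s. 0 \<le> rho s) \<and> (\<Sum>s\<in>UNIV. rho s) = 1 \<and>
     Sbot \<noteq> {} \<and>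
     \<comment> \<open>E_pi[T] < infinity for every policy: T finite a.s. and sum of t Pr(T=t) finite\<close>
     (\<forall>pol. is_policy pol \<longrightarrow>
         (hit_prob P rho Sbot pol sums 1) \<and> summable (\<lambda>t. real t * hit_prob P rho Sbot pol t)) \<and>
     \<comment> \<open>terminal states restart according to rho\<close>
     (\<forall>s\<in>Sbot. \<forall>a s'. P s a s' = rho s') \<and>
     \<comment> \<open>every state is reachable under some policy\<close>
     (\<forall>s. \<exists>pol. is_policy pol \<and> (\<exists>xs. xs \<noteq> [] \<and> fst (last xs) = s \<and>
          (\<forall>x\<in>set (butlast xs). fst x \<notin> Sbot) \<and> traj_prob P rho pol xs > 0))"

definition J :: "('s::finite \<Rightarrow> 'a::finite \<Rightarrow> 's \<Rightarrow> real) \<Rightarrow> ('s \<Rightarrow> real) \<Rightarrow> ('s \<Rightarrow> real) \<Rightarrow> 's set \<Rightarrow> ('s \<Rightarrow> 'a \<Rightarrow> real) \<Rightarrow> real" where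
  "J P R rho Sbot pol = episode_exp P rho Sbot pol (\<lambda>xs. \<Sum>x\<leftarrow>xs. R (fst x))"

definition is_optimal :: "('s::finite \<Rightarrow> 'a::finite \<Rightarrow> 's \<Rightarrow> real) \<Rightarrow> ('s \<Rightarrow> real) \<Rightarrow> ('s \<Rightarrow> real) \<Rightarrow> 's set \<Rightarrow> ('s \<Rightarrow> 'a \<Rightarrow> real) \<Rightarrow> bool" where
  "is_optimal P R rho Sbot mu \<longleftrightarrow> is_policy mu \<and> (\<forall>pol. is_policy pol \<longrightarrow> J P R rho Sbot pol \<le> J P R rho Sbot mu)"

definition bellman :: "('s::finite \<Rightarrow> 'a::finite \<Rightarrow> 's \<Rightarrow> real) \<Rightarrow> ('s \<Rightarrow> real) \<Rightarrow> 's set \<Rightarrow> ('s \<Rightarrow> 'a \<Rightarrow> real) \<Rightarrow> 's \<Rightarrow> 'a \<Rightarrow> real" where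
  "bellman P R Sbot Q s a =
     (\<Sum>s'\<in>UNIV. P s a s' * (R s' + (if s' \<notin> Sbot then Max (range (Q s')) else 0)))"

definition lagrangian :: "('s::finite \<Rightarrow> 'a::finite \<Rightarrow> 's \<Rightarrow> real) \<Rightarrow> ('s \<Rightarrow> real) \<Rightarrow> ('s \<Rightarrow> real) \<Rightarrow> 's set
    \<Rightarrow> ('s \<Rightarrow> 'a \<Rightarrow> real) \<Rightarrow> ('s \<Rightarrow> 'a \<Rightarrow> real) \<Rightarrow> ('s \<Rightarrow> 'a \<Rightarrow> real) \<Rightarrow> real" where
  "lagrangian P R rho Sbot pol Q lam =
     episode_exp P rho Sbot pol (\<lambda>xs. Q (fst (last xs)) (snd (last xs)))
     + (\<Sum>s\<in>UNIV. \<Sum>a\<in>UNIV. lam s a * (bellman P R Sbot Q s a - Q s a))"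

definition nonneg_multipliers :: "('s \<Rightarrow> 'a \<Rightarrow> real) set" where
  "nonneg_multipliers = {lam. \<forall>s a. 0 \<le> lam s a}"

end

theory Submission
  imports Defs
begin


lemma steps_prob_snoc:
  "xs \<noteq> [] \<Longrightarrow> steps_prob P pol (xs @ [(s',a')]) = steps_prob P pol xs * P (fst (last xs)) (snd (last xs)) s' * pol s' a'"
  by (induction P pol xs rule: steps_prob.induct) (auto simp: algebra_simps)

lemma traj_prob_snoc:
  "ys \<noteq> [] \<Longrightarrow> traj_prob P rho pol (ys @ [(s',a')]) = traj_prob P rho pol ys * P (fst (last ys)) (snd (last ys)) s' * pol s' a'"
proof (cases ys)
  case (Cons y ys')
  obtain s a where y: "y = (s,a)" by force
  have "steps_prob P pol (((s,a)#ys') @ [(s',a')]) = steps_prob P pol ((s,a)#ys') * P (fst (last ((s,a)#ys'))) (snd (last ((s,a)#ys'))) s' * pol s' a'"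
    by (rule steps_prob_snoc) simp
  then show ?thesis using Cons y by (simp add: algebra_simps)
qed simp

lemma traj_prob_snoc':
  "traj_prob P rho pol (ys @ [(s',a')]) = (if ys = [] then rho s' else traj_prob P rho pol ys * P (fst (last ys)) (snd (last ys)) s') * pol s' a'"
  by (cases "ys = []") (simp_all add: traj_prob_snoc)

lemma traj_prob_nonneg:
  assumes "\<forall>s a s'. 0 \<le> P s a s'" "\<forall>s. 0 \<le> rho s" "\<forall>s a. 0 \<le> pol s a"
  shows "0 \<le> traj_prob P rho pol xs"
proof (induction xs rule: rev_induct)
  case (snoc x xs)
  obtain s a where "x = (s,a)" by force
  then show ?case using snoc assms by (simp add: traj_prob_snoc')
qed simp

lemma traj_prob_cong:
  assumes "\<forall>x\<in>set xs. pol (fst x) (snd x) = pol' (fst x) (snd x)"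
  shows "traj_prob P rho pol xs = traj_prob P rho pol' xs"
  using assms
proof (induction xs rule: rev_induct)
  case (snoc x xs)
  obtain s a where "x = (s,a)" by force
  then show ?case using snoc by (simp add: traj_prob_snoc')
qed simp



locale elp =
  fixes P :: "'s::finite \<Rightarrow> 'a::finite \<Rightarrow> 's \<Rightarrow> real" and R :: "'s \<Rightarrow> real"
    and rho :: "'s \<Rightarrow> real" and Sbot :: "'s set"
  assumes elp: "finite_ELP P R rho Sbot"
begin

lemma P_nonneg: "0 \<le> P s a s'" using elp by (simp add: finite_ELP_def)
lemma P_sum: "(\<Sum>s'\<in>UNIV. P s a s') = 1" using elp by (simp add: finite_ELP_def)
lemma rho_nonneg: "0 \<le> rho s" using elp by (simp add: finite_ELP_def)
lemma rho_sum: "(\<Sum>s\<in>UNIV. rho s) = 1" using elp by (simp add: finite_ELP_def)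
lemma Sbot_ne: "Sbot \<noteq> {}" using elp by (simp add: finite_ELP_def)
lemma hit_sums: "is_policy pol \<Longrightarrow> hit_prob P rho Sbot pol sums 1" using elp by (simp add: finite_ELP_def)
lemma restart: "s \<in> Sbot \<Longrightarrow> P s a s' = rho s'" using elp by (simp add: finite_ELP_def)
lemma reach: "\<exists>pol. is_policy pol \<and> (\<exists>xs. xs \<noteq> [] \<and> fst (last xs) = s \<and>
          (\<forall>x\<in>set (butlast xs). fst x \<notin> Sbot) \<and> traj_prob P rho pol xs > 0)"
  using elp by (simp add: finite_ELP_def)

lemma pol_nonneg: "is_policy pol \<Longrightarrow> 0 \<le> pol s a" by (simp add: is_policy_def)
lemma pol_sum: "is_policy pol \<Longrightarrow> (\<Sum>a\<in>UNIV. pol s a) = 1" by (simp add: is_policy_def)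

lemma tp_nonneg: "is_policy pol \<Longrightarrow> 0 \<le> traj_prob P rho pol xs"
  by (rule traj_prob_nonneg) (auto simp: P_nonneg rho_nonneg pol_nonneg)

definition LL :: "nat \<Rightarrow> 's \<Rightarrow> 'a \<Rightarrow> ('s \<times> 'a) list set" where
  "LL m s a = {xs. length xs = m \<and> (\<forall>x\<in>set (butlast xs). fst x \<notin> Sbot) \<and> last xs = (s,a)}"

lemma finite_len: "finite {xs :: ('s \<times> 'a) list. length xs = m \<and> Q xs}"
proof -
  have "finite {xs :: ('s \<times> 'a) list. set xs \<subseteq> UNIV \<and> length xs = m}"
    by (rule finite_lists_length_eq) simp
  then show ?thesis by (rule rev_finite_subset) auto
qed

lemma finite_LL: "finite (LL m s a)"
  unfolding LL_def using finite_len by simp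

lemma sum_group_last:
  fixes X :: "('s \<times> 'a) list set"
  assumes "finite X"
  shows "(\<Sum>xs\<in>X. h xs) = (\<Sum>s\<in>UNIV. \<Sum>a\<in>UNIV. \<Sum>xs\<in>{xs\<in>X. last xs = (s,a)}. h xs)"
proof -
  have "(\<Sum>xs\<in>X. h xs) = (\<Sum>p\<in>UNIV. \<Sum>xs\<in>{xs\<in>X. last xs = p}. h xs)"
    by (rule sum.group[symmetric]) (auto simp: assms)
  also have "\<dots> = (\<Sum>s\<in>UNIV. \<Sum>a\<in>UNIV. \<Sum>xs\<in>{xs\<in>X. last xs = (s,a)}. h xs)"
    unfolding UNIV_Times_UNIV[symmetric] sum.cartesian_product by simp
  finally show ?thesis .
qed

lemma LL_1: "LL (Suc 0) s a = {[(s,a)]}"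
  unfolding LL_def by (auto simp: length_Suc_conv)

definition AA :: "nat \<Rightarrow> ('s \<times> 'a) list set" where
  "AA n = {ys. length ys = Suc n \<and> (\<forall>x\<in>set ys. fst x \<notin> Sbot)}"

lemma LL_Suc: "LL (Suc (Suc n)) s' a' = (\<lambda>ys. ys @ [(s',a')]) ` AA n"
proof safe
  fix xs assume "xs \<in> LL (Suc (Suc n)) s' a'"
  then have xs: "length xs = Suc (Suc n)" "\<forall>x\<in>set (butlast xs). fst x \<notin> Sbot" "last xs = (s',a')"
    by (auto simp: LL_def)
  then have "xs \<noteq> []" by auto
  then have "xs = butlast xs @ [(s',a')]" using xs(3) by (metis append_butlast_last_id)
  moreover have "butlast xs \<in> AA n" using xs by (auto simp: AA_def)
  ultimately show "xs \<in> (\<lambda>ys. ys @ [(s',a')]) ` AA n" by blast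
next
  fix ys assume "ys \<in> AA n"
  then show "ys @ [(s',a')] \<in> LL (Suc (Suc n)) s' a'" by (auto simp: AA_def LL_def)
qed

lemma AA_group: "(\<Sum>ys\<in>AA n. h ys) = (\<Sum>s\<in>-Sbot. \<Sum>a\<in>UNIV. \<Sum>ys\<in>LL (Suc n) s a. h ys)"
proof -
  have fin: "finite (AA n)" unfolding AA_def using finite_len by simp
  have "(\<Sum>ys\<in>AA n. h ys) = (\<Sum>s\<in>UNIV. \<Sum>a\<in>UNIV. \<Sum>xs\<in>{xs\<in>AA n. last xs = (s,a)}. h xs)"
    by (rule sum_group_last[OF fin])
  also have "\<dots> = (\<Sum>s\<in>UNIV. if s \<in> Sbot then 0 else \<Sum>a\<in>UNIV. \<Sum>ys\<in>LL (Suc n) s a. h ys)"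
  proof (rule sum.cong[OF refl])
    fix s
    show "(\<Sum>a\<in>UNIV. \<Sum>xs\<in>{xs\<in>AA n. last xs = (s,a)}. h xs) = (if s \<in> Sbot then 0 else \<Sum>a\<in>UNIV. \<Sum>ys\<in>LL (Suc n) s a. h ys)"
    proof (cases "s \<in> Sbot")
      case True
      have e: "{xs\<in>AA n. last xs = (s,a)} = {}" for a
      proof -
        { fix xs assume xs: "xs \<in> AA n" "last xs = (s,a)"
          then have "xs \<noteq> []" "\<forall>x\<in>set xs. fst x \<notin> Sbot" by (auto simp: AA_def)
          then have "fst (last xs) \<notin> Sbot" by simp
          with xs(2) True have False by simp }
        then show ?thesis by blast
      qed
      show ?thesis using True by (simp only: e) simp
    next
      case False
      have "{xs\<in>AA n. last xs = (s,a)} = LL (Suc n) s a" for a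
      proof safe
        fix xs assume "xs \<in> AA n" "last xs = (s,a)"
        then show "xs \<in> LL (Suc n) s a" unfolding AA_def LL_def by (auto dest: in_set_butlastD)
      next
        fix xs assume xs: "xs \<in> LL (Suc n) s a"
        then have ne: "xs \<noteq> []" and l: "last xs = (s,a)" and b: "\<forall>x\<in>set (butlast xs). fst x \<notin> Sbot"
          and len: "length xs = Suc n" by (auto simp: LL_def)
        have "set xs = set (butlast xs @ [last xs])" using ne by simp
        then have "\<forall>x\<in>set xs. fst x \<notin> Sbot" using b l False by auto
        then show "xs \<in> AA n" using len by (simp add: AA_def)
        show "last xs = (s,a)" by (rule l)
      qed
      then show ?thesis using False by simp
    qed
  qed
  also have "\<dots> = (\<Sum>s\<in>-Sbot. \<Sum>a\<in>UNIV. \<Sum>ys\<in>LL (Suc n) s a. h ys)"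
    by (simp add: sum.If_cases Compl_eq_Diff_UNIV)
  finally show ?thesis .
qed

definition W :: "('s \<Rightarrow> 'a \<Rightarrow> real) \<Rightarrow> (('s \<times> 'a) list \<Rightarrow> real) \<Rightarrow> nat \<Rightarrow> 's \<Rightarrow> 'a \<Rightarrow> real" where
  "W pol g n s a = (\<Sum>xs\<in>LL (Suc n) s a. traj_prob P rho pol xs * g xs)"

lemma W_0: "W pol g 0 s a = rho s * pol s a * g [(s,a)]"
  by (simp add: W_def LL_1)

lemma W_Suc: "W pol g (Suc n) s' a' =
   (\<Sum>s\<in>-Sbot. \<Sum>a\<in>UNIV. \<Sum>ys\<in>LL (Suc n) s a. traj_prob P rho pol ys * P s a s' * pol s' a' * g (ys @ [(s',a')]))"
proof -
  have "W pol g (Suc n) s' a' = (\<Sum>ys\<in>AA n. traj_prob P rho pol (ys @ [(s',a')]) * g (ys @ [(s',a')]))"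
    unfolding W_def LL_Suc by (subst sum.reindex) (auto simp: inj_on_def)
  also have "\<dots> = (\<Sum>s\<in>-Sbot. \<Sum>a\<in>UNIV. \<Sum>ys\<in>LL (Suc n) s a. traj_prob P rho pol (ys @ [(s',a')]) * g (ys @ [(s',a')]))"
    by (rule AA_group)
  also have "\<dots> = (\<Sum>s\<in>-Sbot. \<Sum>a\<in>UNIV. \<Sum>ys\<in>LL (Suc n) s a. traj_prob P rho pol ys * P s a s' * pol s' a' * g (ys @ [(s',a')]))"
  proof (intro sum.cong refl)
    fix s a ys assume "ys \<in> LL (Suc n) s a"
    then have "ys \<noteq> []" "last ys = (s,a)" by (auto simp: LL_def)
    then show "traj_prob P rho pol (ys @ [(s',a')]) * g (ys @ [(s',a')]) = traj_prob P rho pol ys * P s a s' * pol s' a' * g (ys @ [(s',a')])"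
      by (simp add: traj_prob_snoc)
  qed
  finally show ?thesis .
qed

definition al :: "('s \<Rightarrow> 'a \<Rightarrow> real) \<Rightarrow> nat \<Rightarrow> 's \<Rightarrow> 'a \<Rightarrow> real" where
  "al pol n s a = W pol (\<lambda>_. 1) n s a"

lemma al_0: "al pol 0 s a = rho s * pol s a"
  by (simp add: al_def W_0)

lemma al_Suc: "al pol (Suc n) s' a' = (\<Sum>s\<in>-Sbot. \<Sum>a\<in>UNIV. al pol n s a * P s a s') * pol s' a'"
  unfolding al_def W_Suc by (simp add: W_def sum_distrib_right)

definition Cw :: "('s \<Rightarrow> 'a \<Rightarrow> real) \<Rightarrow> nat \<Rightarrow> 's \<Rightarrow> 'a \<Rightarrow> real" where
  "Cw pol n s a = W pol (\<lambda>xs. \<Sum>x\<leftarrow>xs. R (fst x)) n s a"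

lemma Cw_0: "Cw pol 0 s a = rho s * pol s a * R s"
  by (simp add: Cw_def W_0)

lemma Cw_Suc: "Cw pol (Suc n) s' a' = (\<Sum>s\<in>-Sbot. \<Sum>a\<in>UNIV. (Cw pol n s a + al pol n s a * R s') * P s a s') * pol s' a'"
  (is "_ = ?rhs")
proof -
  have "Cw pol (Suc n) s' a' = (\<Sum>s\<in>-Sbot. \<Sum>a\<in>UNIV. \<Sum>ys\<in>LL (Suc n) s a. traj_prob P rho pol ys * P s a s' * pol s' a' * ((\<Sum>x\<leftarrow>ys. R (fst x)) + R s'))"
    unfolding Cw_def W_Suc by simp
  also have "\<dots> = (\<Sum>s\<in>-Sbot. \<Sum>a\<in>UNIV. (Cw pol n s a + al pol n s a * R s') * P s a s' * pol s' a')"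
  proof (intro sum.cong refl)
    fix s a
    have "(\<Sum>ys\<in>LL (Suc n) s a. traj_prob P rho pol ys * P s a s' * pol s' a' * ((\<Sum>x\<leftarrow>ys. R (fst x)) + R s'))
      = (\<Sum>ys\<in>LL (Suc n) s a. (traj_prob P rho pol ys * (\<Sum>x\<leftarrow>ys. R (fst x)) + traj_prob P rho pol ys * R s') * (P s a s' * pol s' a'))"
      by (intro sum.cong refl) (simp add: algebra_simps)
    also have "\<dots> = (Cw pol n s a + al pol n s a * R s') * P s a s' * pol s' a'"
      unfolding sum_distrib_right[symmetric] sum.distrib Cw_def al_def W_def by (simp add: sum_distrib_right)
    finally show "(\<Sum>ys\<in>LL (Suc n) s a. traj_prob P rho pol ys * P s a s' * pol s' a' * ((\<Sum>x\<leftarrow>ys. R (fst x)) + R s')) = (Cw pol n s a + al pol n s a * R s') * P s a s' * pol s' a'" .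
  qed
  also have "\<dots> = ?rhs" by (simp add: sum_distrib_right)
  finally show ?thesis .
qed

end


lemma sum_UNIV_split: "(\<Sum>x\<in>UNIV. f x) = (\<Sum>x\<in>A. f x) + (\<Sum>x\<in>-A. f x)" for f :: "'x::finite \<Rightarrow> real"
proof -
  have "UNIV = A \<union> -A" by auto
  then have "(\<Sum>x\<in>UNIV. f x) = (\<Sum>x\<in>A \<union> -A. f x)" by simp
  also have "\<dots> = (\<Sum>x\<in>A. f x) + (\<Sum>x\<in>-A. f x)" by (rule sum.union_disjoint) auto
  finally show ?thesis .
qed

lemma swap3: "(\<Sum>a'\<in>C. \<Sum>s\<in>A. \<Sum>a\<in>B. f a' s a) = (\<Sum>s\<in>A. \<Sum>a\<in>B. \<Sum>a'\<in>C. f a' s a)"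
proof -
  have "(\<Sum>a'\<in>C. \<Sum>s\<in>A. \<Sum>a\<in>B. f a' s a) = (\<Sum>s\<in>A. \<Sum>a'\<in>C. \<Sum>a\<in>B. f a' s a)" by (rule sum.swap)
  also have "\<dots> = (\<Sum>s\<in>A. \<Sum>a\<in>B. \<Sum>a'\<in>C. f a' s a)" by (rule sum.cong[OF refl], rule sum.swap)
  finally show ?thesis .
qed

context elp begin

lemma stopped_group:
  "(\<Sum>xs | length xs = Suc n \<and> stopped Sbot xs. h xs) = (\<Sum>s\<in>Sbot. \<Sum>a\<in>UNIV. \<Sum>xs\<in>LL (Suc n) s a. h xs)"
proof -
  let ?X = "{xs :: ('s \<times> 'a) list. length xs = Suc n \<and> stopped Sbot xs}"
  have fin: "finite ?X" by (rule finite_len)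
  have "(\<Sum>xs\<in>?X. h xs) = (\<Sum>s\<in>UNIV. \<Sum>a\<in>UNIV. \<Sum>xs\<in>{xs\<in>?X. last xs = (s,a)}. h xs)"
    by (rule sum_group_last[OF fin])
  also have "\<dots> = (\<Sum>s\<in>UNIV. if s \<in> Sbot then \<Sum>a\<in>UNIV. \<Sum>xs\<in>LL (Suc n) s a. h xs else 0)"
  proof (rule sum.cong[OF refl])
    fix s
    have e: "{xs\<in>?X. last xs = (s,a)} = (if s \<in> Sbot then LL (Suc n) s a else {})" for a
      by (auto simp: stopped_def LL_def)
    show "(\<Sum>a\<in>UNIV. \<Sum>xs\<in>{xs\<in>?X. last xs = (s,a)}. h xs) = (if s \<in> Sbot then \<Sum>a\<in>UNIV. \<Sum>xs\<in>LL (Suc n) s a. h xs else 0)"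
      by (simp only: e) simp
  qed
  also have "\<dots> = (\<Sum>s\<in>Sbot. \<Sum>a\<in>UNIV. \<Sum>xs\<in>LL (Suc n) s a. h xs)"
    by (simp add: sum.If_cases)
  finally show ?thesis .
qed

lemma stopped_0: "{xs. length xs = 0 \<and> stopped Sbot xs} = {}"
  by (auto simp: stopped_def)

definition hS :: "('s \<Rightarrow> 'a \<Rightarrow> real) \<Rightarrow> nat \<Rightarrow> real" where
  "hS pol n = (\<Sum>s\<in>Sbot. \<Sum>a\<in>UNIV. al pol n s a)"

lemma episode_exp_eq:
  assumes "(\<lambda>n. \<Sum>s\<in>Sbot. \<Sum>a\<in>UNIV. W pol f n s a) sums x"
  shows "episode_exp P rho Sbot pol f = x"
proof -
  let ?g = "\<lambda>t. \<Sum>xs | length xs = t \<and> stopped Sbot xs. traj_prob P rho pol xs * f xs"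
  have "(\<lambda>n. ?g (Suc n)) = (\<lambda>n. \<Sum>s\<in>Sbot. \<Sum>a\<in>UNIV. W pol f n s a)"
    by (simp only: stopped_group W_def)
  then have "(\<lambda>n. ?g (Suc n)) sums x" using assms by simp
  then have "?g sums (x + ?g 0)" by (rule sums_Suc)
  moreover have "?g 0 = 0" by (simp only: stopped_0) simp
  ultimately have "?g sums x" by simp
  then show ?thesis unfolding episode_exp_def by (rule sums_unique[symmetric])
qed

lemma hit_prob_Suc: "hit_prob P rho Sbot pol (Suc n) = hS pol n"
  unfolding hit_prob_def hS_def al_def W_def by (simp only: stopped_group) simp

lemma hit_prob_0: "hit_prob P rho Sbot pol 0 = 0"
  unfolding hit_prob_def by (simp only: stopped_0) simp

lemma hS_sums: "is_policy pol \<Longrightarrow> hS pol sums 1"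
proof -
  assume "is_policy pol"
  then have "hit_prob P rho Sbot pol sums 1" by (rule hit_sums)
  then have "(\<lambda>n. hit_prob P rho Sbot pol (Suc n)) sums (1 - hit_prob P rho Sbot pol 0)"
    using sums_Suc_iff[of "hit_prob P rho Sbot pol" "1 - hit_prob P rho Sbot pol 0"] by simp
  then show ?thesis by (simp add: hit_prob_Suc hit_prob_0)
qed

lemma al_nonneg: "is_policy pol \<Longrightarrow> 0 \<le> al pol n s a"
  unfolding al_def W_def by (auto intro!: sum_nonneg tp_nonneg)

definition Mop :: "('s \<Rightarrow> 'a \<Rightarrow> real) \<Rightarrow> ('s \<Rightarrow> 'a \<Rightarrow> real) \<Rightarrow> 's \<Rightarrow> 'a \<Rightarrow> real" where
  "Mop pol h s a = (\<Sum>s'\<in>-Sbot. P s a s' * (\<Sum>a'\<in>UNIV. pol s' a' * h s' a'))"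

lemma adjoint:
  "(\<Sum>s\<in>-Sbot. \<Sum>a\<in>UNIV. al pol (Suc n) s a * h s a) = (\<Sum>s\<in>-Sbot. \<Sum>a\<in>UNIV. al pol n s a * Mop pol h s a)"
proof -
  have "(\<Sum>s\<in>-Sbot. \<Sum>a\<in>UNIV. al pol (Suc n) s a * h s a)
     = (\<Sum>s'\<in>-Sbot. \<Sum>a'\<in>UNIV. \<Sum>s\<in>-Sbot. \<Sum>a\<in>UNIV. al pol n s a * P s a s' * (pol s' a' * h s' a'))"
    by (simp add: al_Suc sum_distrib_right mult.assoc)
  also have "\<dots> = (\<Sum>s'\<in>-Sbot. \<Sum>s\<in>-Sbot. \<Sum>a\<in>UNIV. \<Sum>a'\<in>UNIV. al pol n s a * P s a s' * (pol s' a' * h s' a'))"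
    by (intro sum.cong refl) (rule swap3)
  also have "\<dots> = (\<Sum>s\<in>-Sbot. \<Sum>a\<in>UNIV. \<Sum>s'\<in>-Sbot. \<Sum>a'\<in>UNIV. al pol n s a * P s a s' * (pol s' a' * h s' a'))"
    by (subst sum.swap) (intro sum.cong refl, rule sum.swap)
  also have "\<dots> = (\<Sum>s\<in>-Sbot. \<Sum>a\<in>UNIV. al pol n s a * Mop pol h s a)"
    by (simp add: Mop_def sum_distrib_left mult.assoc)
  finally show ?thesis .
qed

end


context elp begin

definition tot :: "('s \<Rightarrow> 'a \<Rightarrow> real) \<Rightarrow> nat \<Rightarrow> real" where
  "tot pol n = (\<Sum>s\<in>UNIV. \<Sum>a\<in>UNIV. al pol n s a)"
definition alive :: "('s \<Rightarrow> 'a \<Rightarrow> real) \<Rightarrow> nat \<Rightarrow> real" where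
  "alive pol n = (\<Sum>s\<in>-Sbot. \<Sum>a\<in>UNIV. al pol n s a)"

lemma tot_0: "is_policy pol \<Longrightarrow> tot pol 0 = 1"
  by (simp add: tot_def al_0 sum_distrib_left[symmetric] pol_sum rho_sum)

lemma tot_Suc: "is_policy pol \<Longrightarrow> tot pol (Suc n) = alive pol n"
proof -
  assume pol: "is_policy pol"
  have "tot pol (Suc n) = (\<Sum>s'\<in>UNIV. \<Sum>s\<in>-Sbot. \<Sum>a\<in>UNIV. al pol n s a * P s a s')"
  proof -
    have "\<And>s'. (\<Sum>a'\<in>UNIV. (\<Sum>s\<in>-Sbot. \<Sum>a\<in>UNIV. al pol n s a * P s a s') * pol s' a') = (\<Sum>s\<in>-Sbot. \<Sum>a\<in>UNIV. al pol n s a * P s a s')"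
      by (simp add: sum_distrib_left[symmetric] pol_sum[OF pol])
    then show ?thesis by (simp add: tot_def al_Suc)
  qed
  also have "\<dots> = (\<Sum>s\<in>-Sbot. \<Sum>a\<in>UNIV. \<Sum>s'\<in>UNIV. al pol n s a * P s a s')"
    by (rule swap3)
  also have "\<dots> = alive pol n"
    by (simp add: alive_def sum_distrib_left[symmetric] P_sum)
  finally show ?thesis .
qed

lemma tot_split: "tot pol n = hS pol n + alive pol n"
  unfolding tot_def hS_def alive_def by (rule sum_UNIV_split)

lemma partial_mass: "is_policy pol \<Longrightarrow> (\<Sum>k<n. hS pol k) + tot pol n = 1"
proof (induction n)
  case 0 then show ?case by (simp add: tot_0)
next
  case (Suc n)
  then show ?case using tot_split[of pol n] tot_Suc[OF Suc.prems, of n] by simp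
qed

lemma alive_lim: "is_policy pol \<Longrightarrow> alive pol \<longlonglongrightarrow> 0"
proof -
  assume pol: "is_policy pol"
  have "(\<lambda>n. \<Sum>k<n. hS pol k) \<longlonglongrightarrow> 1" using hS_sums[OF pol] by (simp add: sums_def)
  then have "(\<lambda>n. 1 - (\<Sum>k<n. hS pol k)) \<longlonglongrightarrow> 1 - 1" by (intro tendsto_intros)
  moreover have "tot pol = (\<lambda>n. 1 - (\<Sum>k<n. hS pol k))" using partial_mass[OF pol] by (auto simp: algebra_simps)
  ultimately have "tot pol \<longlonglongrightarrow> 0" by simp
  then have "(\<lambda>n. tot pol (Suc n)) \<longlonglongrightarrow> 0" by (rule LIMSEQ_Suc)
  then show ?thesis using tot_Suc[OF pol] by simp
qed

lemma al_pol_zero: "pol s a = 0 \<Longrightarrow> al pol n s a = 0"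
  by (cases n) (simp_all add: al_0 al_Suc)

lemma tp_prefix:
  assumes pol: "is_policy pol" and "ys \<noteq> []" and "traj_prob P rho pol (ys @ zs) > 0"
  shows "traj_prob P rho pol ys > 0"
  using assms(3)
proof (induction zs rule: rev_induct)
  case Nil then show ?case by simp
next
  case (snoc z zs)
  obtain s a where z: "z = (s,a)" by force
  have "traj_prob P rho pol (ys @ zs @ [z]) = traj_prob P rho pol (ys @ zs) * P (fst (last (ys @ zs))) (snd (last (ys @ zs))) s * pol s a"
    using traj_prob_snoc[where ys="ys @ zs" and s'=s and a'=a and P=P and rho=rho and pol=pol] assms(2) z by simp
  moreover have "0 \<le> traj_prob P rho pol (ys @ zs)" by (rule tp_nonneg[OF pol])
  ultimately have "traj_prob P rho pol (ys @ zs) \<noteq> 0" using snoc.prems by auto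
  then show ?case using snoc.IH \<open>0 \<le> traj_prob P rho pol (ys @ zs)\<close> by simp
qed

lemma al_ge_tp:
  assumes pol: "is_policy pol" and "xs \<in> LL (Suc n) s a"
  shows "traj_prob P rho pol xs \<le> al pol n s a"
  unfolding al_def W_def using assms finite_LL
  by (simp add: member_le_sum tp_nonneg)

lemma path_entry:
  assumes pp: "is_policy pp" and tau: "is_policy tau"
    and ne: "xs \<noteq> []" and lastC: "fst (last xs) \<in> C"
    and bl: "\<forall>x\<in>set (butlast xs). fst x \<notin> Sbot" and tp: "traj_prob P rho pp xs > 0"
    and agree: "\<forall>s a. s \<notin> C \<longrightarrow> tau s a = pp s a" and posC: "\<forall>s\<in>C. \<exists>a. tau s a > 0"
  shows "\<exists>m s a. s \<in> C \<and> al tau m s a > 0"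
proof -
  define j where "j = (LEAST j. j < length xs \<and> fst (xs ! j) \<in> C)"
  have ex: "length xs - 1 < length xs \<and> fst (xs ! (length xs - 1)) \<in> C"
    using ne lastC by (simp add: last_conv_nth)
  have j: "j < length xs" "fst (xs ! j) \<in> C" using LeastI[of "\<lambda>j. j < length xs \<and> fst (xs ! j) \<in> C", OF ex]
    by (simp_all add: j_def)
  have jmin: "\<And>i. i < j \<Longrightarrow> fst (xs ! i) \<notin> C"
  proof -
    fix i assume "i < j"
    then have "\<not> (i < length xs \<and> fst (xs ! i) \<in> C)" unfolding j_def by (rule not_less_Least)
    with \<open>i < j\<close> j(1) show "fst (xs ! i) \<notin> C" by simp
  qed
  define ys where "ys = take j xs"
  obtain s b where sb: "xs ! j = (s,b)" by force
  have sC: "s \<in> C" using j sb by simp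
  have tk: "take (Suc j) xs = ys @ [(s,b)]" using j(1) sb by (simp add: ys_def take_Suc_conv_app_nth)
  have "traj_prob P rho pp (take (Suc j) xs @ drop (Suc j) xs) > 0" using tp by simp
  then have tp1: "traj_prob P rho pp (ys @ [(s,b)]) > 0" using tp_prefix[OF pp] tk by (metis snoc_eq_iff_butlast)
  have ysC: "\<forall>x\<in>set ys. fst x \<notin> C"
  proof
    fix x assume "x \<in> set ys"
    then obtain i where "i < length ys" "ys ! i = x" by (auto simp: in_set_conv_nth)
    then show "fst x \<notin> C" using jmin j(1) by (auto simp: ys_def)
  qed
  have eq: "traj_prob P rho tau ys = traj_prob P rho pp ys"
    by (rule traj_prob_cong) (use ysC agree in auto)
  obtain a where a: "tau s a > 0" using posC sC by blast
  define F where "F = (if ys = [] then rho s else traj_prob P rho pp ys * P (fst (last ys)) (snd (last ys)) s)"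
  have "traj_prob P rho pp (ys @ [(s,b)]) = F * pp s b" unfolding F_def by (rule traj_prob_snoc')
  with tp1 pol_nonneg[OF pp, of s b] have Fpos: "F > 0"
    by (metis less_eq_real_def mult_nonpos_nonneg not_le)
  have "traj_prob P rho tau (ys @ [(s,a)]) = F * tau s a" unfolding F_def eq[symmetric] by (rule traj_prob_snoc')
  with Fpos a have tp2: "traj_prob P rho tau (ys @ [(s,a)]) > 0" by simp
  have lys: "length ys = j" using j(1) by (simp add: ys_def)
  have "set ys \<subseteq> set (butlast xs)"
  proof -
    have "ys = take j (butlast xs)" using j(1) by (simp add: ys_def take_butlast)
    then show ?thesis by (simp add: set_take_subset)
  qed
  then have "ys @ [(s,a)] \<in> LL (Suc j) s a" using bl lys by (auto simp: LL_def)
  then have "traj_prob P rho tau (ys @ [(s,a)]) \<le> al tau j s a" by (rule al_ge_tp[OF tau])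
  with tp2 have "al tau j s a > 0" by linarith
  with sC show ?thesis by blast
qed

definition Mop' :: "('s \<Rightarrow> 'a \<Rightarrow> real) \<Rightarrow> nat \<Rightarrow> ('s \<Rightarrow> 'a \<Rightarrow> real) \<Rightarrow> 's \<Rightarrow> 'a \<Rightarrow> real" where
  "Mop' pol n = Mop pol ^^ n"

lemma Mop_mono: "is_policy pol \<Longrightarrow> (\<And>s a. h s a \<le> h' s a) \<Longrightarrow> Mop pol h s a \<le> Mop pol h' s a"
  unfolding Mop_def
  by (intro sum_mono mult_left_mono P_nonneg) (auto intro: mult_left_mono pol_nonneg)

lemma Mop_add: "Mop pol (\<lambda>s a. h s a + h' s a) s a = Mop pol h s a + Mop pol h' s a"
  unfolding Mop_def by (simp add: distrib_left sum.distrib)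

lemma Mop_scale: "Mop pol (\<lambda>s a. c * h s a) s a = c * Mop pol h s a"
  unfolding Mop_def by (simp add: sum_distrib_left mult.left_commute)

lemma Mop_one: "is_policy pol \<Longrightarrow> Mop pol (\<lambda>_ _. 1) s a \<le> 1"
proof -
  assume pol: "is_policy pol"
  have "Mop pol (\<lambda>_ _. 1) s a = (\<Sum>s'\<in>-Sbot. P s a s')" by (simp add: Mop_def pol_sum[OF pol])
  also have "\<dots> \<le> (\<Sum>s'\<in>UNIV. P s a s')" by (rule sum_mono2) (auto simp: P_nonneg)
  finally show ?thesis by (simp add: P_sum)
qed

lemma Mop'_Suc: "Mop' pol (Suc n) h = Mop pol (Mop' pol n h)"
  by (simp add: Mop'_def)
lemma Mop'_Suc': "Mop' pol (Suc n) h = Mop' pol n (Mop pol h)"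
  by (simp only: Mop'_def funpow_Suc_right comp_apply)
lemma Mop'_0: "Mop' pol 0 h = h" by (simp add: Mop'_def)

lemma Mop'_mono: "is_policy pol \<Longrightarrow> (\<And>s a. h s a \<le> h' s a) \<Longrightarrow> Mop' pol n h s a \<le> Mop' pol n h' s a"
  by (induction n arbitrary: s a) (auto simp: Mop'_0 Mop'_Suc intro!: Mop_mono)

lemma Mop'_add: "Mop' pol n (\<lambda>s a. h s a + h' s a) s a = Mop' pol n h s a + Mop' pol n h' s a"
proof (induction n arbitrary: s a)
  case 0 then show ?case by (simp add: Mop'_0)
next
  case (Suc n)
  have "Mop' pol n (\<lambda>s a. h s a + h' s a) = (\<lambda>s a. Mop' pol n h s a + Mop' pol n h' s a)"
    using Suc by auto
  then show ?case by (simp add: Mop'_Suc Mop_add)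
qed

lemma Mop'_scale: "Mop' pol n (\<lambda>s a. c * h s a) s a = c * Mop' pol n h s a"
proof (induction n arbitrary: s a)
  case 0 then show ?case by (simp add: Mop'_0)
next
  case (Suc n)
  have "Mop' pol n (\<lambda>s a. c * h s a) = (\<lambda>s a. c * Mop' pol n h s a)"
    using Suc by auto
  then show ?case by (simp add: Mop'_Suc Mop_scale)
qed

definition u :: "('s \<Rightarrow> 'a \<Rightarrow> real) \<Rightarrow> nat \<Rightarrow> 's \<Rightarrow> 'a \<Rightarrow> real" where
  "u pol n = Mop' pol n (\<lambda>_ _. 1)"

lemma Mop_nonneg: "is_policy pol \<Longrightarrow> (\<And>s a. 0 \<le> h s a) \<Longrightarrow> 0 \<le> Mop pol h s a"
  using Mop_mono[of pol "\<lambda>_ _. 0" h] by (simp add: Mop_def)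

lemma Mop'_nonneg: "is_policy pol \<Longrightarrow> (\<And>s a. 0 \<le> h s a) \<Longrightarrow> 0 \<le> Mop' pol n h s a"
  by (induction n arbitrary: s a) (auto simp: Mop'_0 Mop'_Suc intro!: Mop_nonneg)

lemma u_nonneg: "is_policy pol \<Longrightarrow> 0 \<le> u pol n s a"
  unfolding u_def by (rule Mop'_nonneg) auto

lemma u_dec: "is_policy pol \<Longrightarrow> u pol (Suc n) s a \<le> u pol n s a"
  unfolding u_def Mop'_Suc' by (rule Mop'_mono) (auto intro: Mop_one)

lemma u_Suc: "u pol (Suc n) = Mop pol (u pol n)"
  by (simp add: u_def Mop'_Suc)

lemma adjoint_iter:
  "(\<Sum>s\<in>-Sbot. \<Sum>a\<in>UNIV. al pol n s a * h s a) = (\<Sum>s\<in>-Sbot. \<Sum>a\<in>UNIV. al pol 0 s a * Mop' pol n h s a)"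
proof (induction n arbitrary: h)
  case 0 then show ?case by (simp add: Mop'_0)
next
  case (Suc n)
  show ?case unfolding adjoint Suc Mop'_Suc' ..
qed

end


context elp begin

lemma pol_pos_ex: "is_policy pol \<Longrightarrow> \<exists>a. pol s a > 0"
proof (rule ccontr)
  assume pol: "is_policy pol" and "\<not> (\<exists>a. pol s a > 0)"
  then have "\<forall>a. pol s a = 0" using pol_nonneg[OF pol] by (meson antisym not_less)
  then show False using pol_sum[OF pol, of s] by simp
qed

lemma closed_mass_mono:
  assumes tau: "is_policy tau" and CN: "C \<subseteq> -Sbot"
    and closed: "\<And>s a s'. s \<in> C \<Longrightarrow> tau s a > 0 \<Longrightarrow> P s a s' > 0 \<Longrightarrow> s' \<in> C"
  shows "(\<Sum>s\<in>C. \<Sum>a\<in>UNIV. al tau n s a) \<le> (\<Sum>s\<in>C. \<Sum>a\<in>UNIV. al tau (Suc n) s a)"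
proof -
  have "(\<Sum>s\<in>C. \<Sum>a\<in>UNIV. al tau n s a) = (\<Sum>s\<in>C. \<Sum>a\<in>UNIV. \<Sum>s'\<in>C. al tau n s a * P s a s')"
  proof (intro sum.cong refl)
    fix s a assume sC: "s \<in> C"
    show "al tau n s a = (\<Sum>s'\<in>C. al tau n s a * P s a s')"
    proof (cases "tau s a = 0")
      case True then show ?thesis by (simp add: al_pol_zero)
    next
      case False
      then have tpos: "tau s a > 0" using pol_nonneg[OF tau, of s a] by simp
      have "(\<Sum>s'\<in>C. P s a s') = (\<Sum>s'\<in>UNIV. P s a s')"
      proof (rule sum.mono_neutral_left)
        show "\<forall>i\<in>UNIV - C. P s a i = 0"
          using closed[OF sC tpos] P_nonneg[of s a] by (metis DiffD2 antisym not_less)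
      qed auto
      then show ?thesis by (simp add: sum_distrib_left[symmetric] P_sum)
    qed
  qed
  also have "\<dots> = (\<Sum>s'\<in>C. \<Sum>s\<in>C. \<Sum>a\<in>UNIV. al tau n s a * P s a s')"
    by (rule swap3[symmetric])
  also have "\<dots> \<le> (\<Sum>s'\<in>C. \<Sum>s\<in>-Sbot. \<Sum>a\<in>UNIV. al tau n s a * P s a s')"
    by (intro sum_mono sum_mono2) (use CN in \<open>auto intro!: sum_nonneg mult_nonneg_nonneg al_nonneg[OF tau] P_nonneg\<close>)
  also have "\<dots> = (\<Sum>s\<in>C. \<Sum>a\<in>UNIV. al tau (Suc n) s a)"
  proof (intro sum.cong refl)
    fix s' show "(\<Sum>s\<in>-Sbot. \<Sum>a\<in>UNIV. al tau n s a * P s a s') = (\<Sum>a\<in>UNIV. al tau (Suc n) s' a)"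
      by (simp add: al_Suc sum_distrib_left[symmetric] pol_sum[OF tau])
  qed
  finally show ?thesis .
qed

lemma u_lim0:
  assumes sig: "is_policy sig"
  shows "(\<lambda>n. u sig n s a) \<longlonglongrightarrow> 0"
proof -
  have conv: "convergent (\<lambda>n. u sig n s a)" for s a
  proof -
    have "decseq (\<lambda>n. u sig n s a)" by (rule decseq_SucI) (rule u_dec[OF sig])
    then obtain L where "(\<lambda>n. u sig n s a) \<longlonglongrightarrow> L" using decseq_convergent u_nonneg[OF sig] by metis
    then show ?thesis by (auto simp: convergent_def)
  qed
  define f where "f s a = lim (\<lambda>n. u sig n s a)" for s a
  have lim: "(\<lambda>n. u sig n s a) \<longlonglongrightarrow> f s a" for s a
    unfolding f_def using conv by (simp add: convergent_LIMSEQ_iff)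
  have f_nonneg: "0 \<le> f s a" for s a
    by (rule LIMSEQ_le_const[OF lim]) (auto intro: u_nonneg[OF sig])
  have harm: "f s a = Mop sig f s a" for s a
  proof -
    have "(\<lambda>n. u sig (Suc n) s a) \<longlonglongrightarrow> f s a" using lim by (rule LIMSEQ_Suc)
    moreover have "(\<lambda>n. u sig (Suc n) s a) \<longlonglongrightarrow> Mop sig f s a"
      unfolding u_Suc Mop_def by (intro tendsto_intros lim)
    ultimately show ?thesis by (rule LIMSEQ_unique)
  qed
  have "\<forall>s a. f s a = 0"
  proof (rule ccontr)
    assume "\<not> (\<forall>s a. f s a = 0)"
    then obtain s1 a1 where "f s1 a1 \<noteq> 0" by blast
    then have f1: "f s1 a1 > 0" using f_nonneg[of s1 a1] by simp
    define c where "c = Max (range (\<lambda>p. f (fst p) (snd p)))"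
    have cge: "f s a \<le> c" for s a
      unfolding c_def by (rule Max_ge) (auto intro: rev_image_eqI[of "(s,a)"])
    have "c \<in> range (\<lambda>p. f (fst p) (snd p))" unfolding c_def
      by (rule Max_in) (simp_all add: finite_class.finite_UNIV)
    then obtain p0 where p0: "c = f (fst p0) (snd p0)" by blast
    obtain s0 a0 where "p0 = (s0,a0)" by force
    with p0 have c0: "f s0 a0 = c" by simp
    have cpos: "c > 0" using cge[of s1 a1] f1 by simp
    have key: "s' \<notin> Sbot \<and> (\<forall>a'. sig s' a' > 0 \<longrightarrow> f s' a' = c)"
      if fc: "f s a = c" and Ppos: "P s a s' > 0" for s a s'
    proof -
      define X where "X s' = (\<Sum>a'\<in>UNIV. sig s' a' * f s' a')" for s'
      have Xle: "X s' \<le> c" for s'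
      proof -
        have "X s' \<le> (\<Sum>a'\<in>UNIV. sig s' a' * c)" unfolding X_def
          by (intro sum_mono mult_left_mono cge pol_nonneg[OF sig])
        also have "\<dots> = (\<Sum>a'\<in>UNIV. sig s' a') * c" by (rule sum_distrib_right[symmetric])
        also have "\<dots> = c" by (simp add: pol_sum[OF sig])
        finally show ?thesis .
      qed
      let ?g = "\<lambda>s'. P s a s' * (c - (if s' \<in> Sbot then 0 else X s'))"
      have "(\<Sum>s'\<in>UNIV. ?g s') = c * (\<Sum>s'\<in>UNIV. P s a s') - (\<Sum>s'\<in>UNIV. P s a s' * (if s' \<in> Sbot then 0 else X s'))"
        by (simp add: algebra_simps sum_subtractf sum_distrib_left)
      also have "(\<Sum>s'\<in>UNIV. P s a s' * (if s' \<in> Sbot then 0 else X s')) = (\<Sum>s'\<in>-Sbot. P s a s' * X s')"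
        by (subst sum_UNIV_split[where A=Sbot]) simp
      also have "\<dots> = f s a" using harm[of s a] by (simp add: Mop_def X_def)
      finally have g0: "(\<Sum>s'\<in>UNIV. ?g s') = 0" using fc by (simp add: P_sum)
      have gnn: "\<forall>s'\<in>UNIV. 0 \<le> ?g s'"
        using Xle cpos by (auto intro!: mult_nonneg_nonneg P_nonneg)
      have "?g s' = 0" using g0 gnn by (simp add: sum_nonneg_eq_0_iff)
      with Ppos have eqc: "c = (if s' \<in> Sbot then 0 else X s')" by simp
      then have ns: "s' \<notin> Sbot" using cpos by (auto split: if_splits)
      with eqc have Xc: "X s' = c" by simp
      have cs: "(\<Sum>a'\<in>UNIV. c * sig s' a') = c" by (simp add: sum_distrib_left[symmetric] pol_sum[OF sig])
      have "(\<Sum>a'\<in>UNIV. sig s' a' * (c - f s' a')) = (\<Sum>a'\<in>UNIV. c * sig s' a') - X s'"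
        by (simp add: X_def algebra_simps sum_subtractf)
      then have "(\<Sum>a'\<in>UNIV. sig s' a' * (c - f s' a')) = c - X s'" using cs by simp
      then have "(\<Sum>a'\<in>UNIV. sig s' a' * (c - f s' a')) = 0" using Xc by simp
      moreover have "\<forall>a'\<in>UNIV. 0 \<le> sig s' a' * (c - f s' a')"
        using cge by (auto intro!: mult_nonneg_nonneg pol_nonneg[OF sig])
      ultimately have "\<forall>a'. sig s' a' * (c - f s' a') = 0" by (simp add: sum_nonneg_eq_0_iff)
      then have "\<forall>a'. sig s' a' > 0 \<longrightarrow> f s' a' = c" by (simp add: mult_eq_0_iff) (metis less_irrefl)
      with ns show ?thesis by blast
    qed
    define C where "C = {s. s \<notin> Sbot \<and> (\<forall>a. sig s a > 0 \<longrightarrow> f s a = c)}"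
    have CN: "C \<subseteq> -Sbot" by (auto simp: C_def)
    have closed: "s' \<in> C" if "s \<in> C" "sig s a > 0" "P s a s' > 0" for s a s'
      using key[of s a s'] that by (auto simp: C_def)
    obtain x where xC: "x \<in> C"
    proof -
      have "0 < Mop sig f s0 a0" using harm[of s0 a0] c0 cpos by simp
      then have "(\<Sum>s'\<in>-Sbot. P s0 a0 s' * (\<Sum>a'\<in>UNIV. sig s' a' * f s' a')) \<noteq> 0" by (simp add: Mop_def)
      then obtain s' where s': "s' \<in> -Sbot" "P s0 a0 s' * (\<Sum>a'\<in>UNIV. sig s' a' * f s' a') \<noteq> 0"
        by (meson sum.neutral)
      then have "P s0 a0 s' > 0" using P_nonneg[of s0 a0 s'] by (simp add: less_eq_real_def)
      then have "s' \<in> C" using key[OF c0] by (simp add: C_def)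
      then show ?thesis by (rule that)
    qed
    obtain pp xs where pp: "is_policy pp" and xs: "xs \<noteq> []" "fst (last xs) = x"
      "\<forall>x\<in>set (butlast xs). fst x \<notin> Sbot" "traj_prob P rho pp xs > 0"
      using reach[of x] by blast
    define tau where "tau s a = (if s \<in> C then sig s a else pp s a)" for s a
    have tau: "is_policy tau"
      unfolding is_policy_def
    proof safe
      fix s a show "0 \<le> tau s a" using pol_nonneg[OF sig] pol_nonneg[OF pp] by (simp add: tau_def)
    next
      fix s show "(\<Sum>a\<in>UNIV. tau s a) = 1" using pol_sum[OF sig] pol_sum[OF pp] by (cases "s \<in> C") (simp_all add: tau_def)
    qed
    have posC: "\<forall>s\<in>C. \<exists>a. tau s a > 0" using pol_pos_ex[OF sig] by (simp add: tau_def)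
    have agree: "\<forall>s a. s \<notin> C \<longrightarrow> tau s a = pp s a" by (simp add: tau_def)
    obtain m s2 a2 where s2: "s2 \<in> C" "al tau m s2 a2 > 0"
      using path_entry[OF pp tau xs(1) _ xs(3) xs(4) agree posC] xs(2) xC by blast
    define mC where "mC n = (\<Sum>s\<in>C. \<Sum>a\<in>UNIV. al tau n s a)" for n
    have closed': "s' \<in> C" if "s \<in> C" "tau s a > 0" "P s a s' > 0" for s a s'
      using closed[of s a s'] that by (simp add: tau_def)
    have mono: "mC n \<le> mC (Suc n)" for n
      unfolding mC_def by (rule closed_mass_mono[OF tau CN closed'])
    have "al tau m s2 a2 \<le> mC m"
    proof -
      have "al tau m s2 a2 \<le> (\<Sum>a\<in>UNIV. al tau m s2 a)"
        by (rule member_le_sum) (auto intro: al_nonneg[OF tau])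
      also have "\<dots> \<le> mC m" unfolding mC_def
        by (rule member_le_sum) (use s2 in \<open>auto intro!: sum_nonneg al_nonneg[OF tau]\<close>)
      finally show ?thesis .
    qed
    have low: "al tau m s2 a2 \<le> alive tau n" if "m \<le> n" for n
    proof -
      have "mC m \<le> mC n" by (rule lift_Suc_mono_le[of mC, OF mono that])
      also have "mC n \<le> alive tau n" unfolding mC_def alive_def
        by (rule sum_mono2) (use CN in \<open>auto intro!: sum_nonneg al_nonneg[OF tau]\<close>)
      finally show ?thesis using \<open>al tau m s2 a2 \<le> mC m\<close> by simp
    qed
    have "eventually (\<lambda>n. alive tau n < al tau m s2 a2) sequentially"
      using order_tendstoD(2)[OF alive_lim[OF tau] s2(2)] .
    then obtain N where "\<forall>n\<ge>N. alive tau n < al tau m s2 a2" by (auto simp: eventually_sequentially)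
    then have "alive tau (max N m) < al tau m s2 a2" by simp
    with low[of "max N m"] show False by simp
  qed
  then show ?thesis using lim[of s a] by simp
qed

end


context elp begin

lemma Mop'_add_n: "Mop' pol (m + n) h = Mop' pol m (Mop' pol n h)"
  by (simp add: Mop'_def funpow_add)

lemma u_anti: "is_policy pol \<Longrightarrow> m \<le> n \<Longrightarrow> u pol n s a \<le> u pol m s a"
  by (rule lift_Suc_antimono_le[of "\<lambda>n. u pol n s a"]) (auto intro: u_dec)

lemma u_geom:
  assumes sig: "is_policy sig"
  shows "\<exists>q. 0 < q \<and> q < 1 \<and> (\<forall>n s a. u sig n s a \<le> 2 * q ^ n)"
proof -
  have ev: "eventually (\<lambda>n. u sig n (fst p) (snd p) < 1/2) sequentially" for p
    by (rule order_tendstoD(2)[OF u_lim0[OF sig]]) simp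
  have "eventually (\<lambda>n. \<forall>p. u sig n (fst p) (snd p) < 1/2) sequentially"
    by (rule eventually_all_finite) (rule ev)
  then obtain N where N: "\<And>n p. n \<ge> N \<Longrightarrow> u sig n (fst p) (snd p) < 1/2"
    by (auto simp: eventually_sequentially)
  define n0 where "n0 = Suc N"
  have n0pos: "0 < n0" by (simp add: n0_def)
  have un0: "u sig n0 s a \<le> 1/2" for s a using N[of n0 "(s,a)"] by (simp add: n0_def)
  have uk: "u sig (k * n0) s a \<le> (1/2) ^ k" for k s a
  proof (induction k arbitrary: s a)
    case 0 then show ?case by (simp add: u_def Mop'_0)
  next
    case (Suc k)
    have "u sig (Suc k * n0) s a = Mop' sig n0 (u sig (k * n0)) s a"
      by (simp add: u_def Mop'_add_n)
    also have "\<dots> \<le> Mop' sig n0 (\<lambda>s a. (1/2) ^ k * 1) s a"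
      by (rule Mop'_mono[OF sig]) (use Suc in simp)
    also have "\<dots> = (1/2) ^ k * u sig n0 s a" unfolding u_def by (rule Mop'_scale)
    also have "\<dots> \<le> (1/2) ^ k * (1/2)" by (rule mult_left_mono[OF un0]) simp
    finally show ?case by simp
  qed
  define q where "q = root n0 (1/2)"
  have q: "0 < q" "q < 1" "q ^ n0 = 1/2" using n0pos by (simp_all add: q_def real_root_gt_zero)
  have "u sig n s a \<le> 2 * q ^ n" for n s a
  proof -
    define k where "k = n div n0"
    have "u sig n s a \<le> u sig (k * n0) s a"
      by (rule u_anti[OF sig]) (simp add: k_def)
    also have "\<dots> \<le> (1/2) ^ k" by (rule uk)
    also have "(1/2::real) ^ k = q ^ (n0 * k)" unfolding power_mult q(3) ..
    also have "\<dots> = 2 * q ^ (n0 * k + n0)" using q(3) by (simp add: power_add)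
    also have "\<dots> \<le> 2 * q ^ n"
    proof -
      have "n \<le> n0 * k + n0"
        using n0pos by (simp add: k_def) (metis add.commute dividend_less_div_times less_imp_le_nat mult.commute)
      then have "q ^ (n0 * k + n0) \<le> q ^ n" by (rule power_decreasing) (use q in auto)
      then show ?thesis by simp
    qed
    finally show ?thesis .
  qed
  with q show ?thesis by blast
qed

end


lemma geom_facts:
  fixes x :: "nat \<Rightarrow> real"
  assumes q: "0 < q" "q < 1" and b: "\<And>n. \<bar>x n\<bar> \<le> C * q ^ n"
  shows "summable x" "x \<longlonglongrightarrow> 0" "(\<lambda>n. real n * x n) \<longlonglongrightarrow> 0"
proof -
  have sg: "summable (\<lambda>n. C * q ^ n)" using q by (intro summable_mult summable_geometric) simp
  show sx: "summable x" by (rule summable_comparison_test[OF _ sg]) (use b in auto)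
  show "x \<longlonglongrightarrow> 0" by (rule summable_LIMSEQ_zero[OF sx])
  have l: "(\<lambda>n. C * (real n * q ^ n)) \<longlonglongrightarrow> C * 0"
    using q by (intro tendsto_intros powser_times_n_limit_0) simp
  show "(\<lambda>n. real n * x n) \<longlonglongrightarrow> 0"
  proof (rule Lim_null_comparison[OF _ l[simplified]])
    show "\<forall>\<^sub>F n in sequentially. norm (real n * x n) \<le> C * (real n * q ^ n)"
    proof (rule always_eventually, rule allI)
      fix n
      have "norm (real n * x n) = real n * \<bar>x n\<bar>" by (simp add: abs_mult)
      also have "\<dots> \<le> real n * (C * q ^ n)" by (rule mult_left_mono[OF b]) simp
      finally show "norm (real n * x n) \<le> C * (real n * q ^ n)" by (simp add: algebra_simps)
    qed
  qed
qed

context elp begin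

lemma alive_le_tot: "is_policy sig \<Longrightarrow> alive sig n \<le> tot sig n"
proof -
  assume sig: "is_policy sig"
  have "0 \<le> hS sig n" unfolding hS_def by (intro sum_nonneg) (simp add: al_nonneg[OF sig])
  then show ?thesis using tot_split[of sig n] by simp
qed

lemma tot_geom:
  assumes sig: "is_policy sig"
  shows "\<exists>K q. 0 < q \<and> q < 1 \<and> (\<forall>n. tot sig n \<le> K * q ^ n)"
proof -
  obtain q where q: "0 < q" "q < 1" "\<And>n s a. u sig n s a \<le> 2 * q ^ n" using u_geom[OF sig] by blast
  have alive: "alive sig n \<le> 2 * q ^ n" for n
  proof -
    have "alive sig n = (\<Sum>s\<in>-Sbot. \<Sum>a\<in>UNIV. al sig n s a * 1)" by (simp add: alive_def)
    also have "\<dots> = (\<Sum>s\<in>-Sbot. \<Sum>a\<in>UNIV. al sig 0 s a * u sig n s a)"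
      using adjoint_iter[of sig n "\<lambda>_ _. 1"] by (simp add: u_def)
    also have "\<dots> \<le> (\<Sum>s\<in>-Sbot. \<Sum>a\<in>UNIV. al sig 0 s a * (2 * q ^ n))"
      by (intro sum_mono mult_left_mono q(3) al_nonneg[OF sig])
    also have "\<dots> = alive sig 0 * (2 * q ^ n)" by (simp add: alive_def sum_distrib_right)
    also have "\<dots> \<le> 1 * (2 * q ^ n)"
    proof (rule mult_right_mono)
      show "alive sig 0 \<le> 1" using alive_le_tot[OF sig, of 0] tot_0[OF sig] by simp
    qed (use q in simp)
    finally show ?thesis by simp
  qed
  have "tot sig n \<le> (2 / q) * q ^ n" for n
  proof (cases n)
    case 0
    have "1 \<le> 2 / q" using q by (simp add: field_simps)
    then show ?thesis using 0 tot_0[OF sig] by simp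
  next
    case (Suc m)
    have "tot sig n = alive sig m" using Suc tot_Suc[OF sig] by simp
    also have "\<dots> \<le> 2 * q ^ m" by (rule alive)
    also have "\<dots> = (2 / q) * q ^ n" using Suc q by (simp add: field_simps)
    finally show ?thesis .
  qed
  with q show ?thesis by blast
qed

lemma al_le_tot: "is_policy sig \<Longrightarrow> al sig n s a \<le> tot sig n"
proof -
  assume sig: "is_policy sig"
  have "al sig n s a \<le> (\<Sum>a\<in>UNIV. al sig n s a)" by (rule member_le_sum) (auto intro: al_nonneg[OF sig])
  also have "\<dots> \<le> tot sig n" unfolding tot_def by (rule member_le_sum) (auto intro!: sum_nonneg al_nonneg[OF sig])
  finally show ?thesis .
qed

definition rr :: "('s \<Rightarrow> 'a \<Rightarrow> real) \<Rightarrow> nat \<Rightarrow> real" where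
  "rr pol n = (\<Sum>s\<in>UNIV. \<Sum>a\<in>UNIV. al pol n s a * R s)"

definition BR :: real where "BR = (\<Sum>s\<in>UNIV. \<bar>R s\<bar>)"

lemma R_le_BR: "\<bar>R s\<bar> \<le> BR"
  unfolding BR_def by (rule member_le_sum) auto

lemma weighted_bound:
  assumes sig: "is_policy sig" and hb: "\<And>s a. \<bar>h s a\<bar> \<le> B"
  shows "\<bar>\<Sum>s\<in>A. \<Sum>a\<in>UNIV. al sig n s a * h s a\<bar> \<le> B * tot sig n"
proof -
  have "\<bar>\<Sum>s\<in>A. \<Sum>a\<in>UNIV. al sig n s a * h s a\<bar> \<le> (\<Sum>s\<in>A. \<Sum>a\<in>UNIV. \<bar>al sig n s a * h s a\<bar>)"
    by (rule order.trans[OF sum_abs]) (intro sum_mono sum_abs)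
  also have "\<dots> \<le> (\<Sum>s\<in>A. \<Sum>a\<in>UNIV. al sig n s a * B)"
    by (intro sum_mono) (simp add: abs_mult al_nonneg[OF sig] mult_left_mono hb)
  also have "\<dots> \<le> (\<Sum>s\<in>UNIV. \<Sum>a\<in>UNIV. al sig n s a * B)"
    by (rule sum_mono2) (auto intro!: sum_nonneg mult_nonneg_nonneg al_nonneg[OF sig] order.trans[OF abs_ge_zero hb])
  also have "\<dots> = B * tot sig n" by (simp add: tot_def sum_distrib_left mult.commute)
  finally show ?thesis .
qed

lemma Cw_bound:
  assumes sig: "is_policy sig"
  shows "\<bar>Cw sig n s a\<bar> \<le> real (Suc n) * BR * al sig n s a"
proof (induction n arbitrary: s a)
  case 0
  have "\<bar>Cw sig 0 s a\<bar> = rho s * sig s a * \<bar>R s\<bar>"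
    by (simp add: Cw_0 abs_mult rho_nonneg pol_nonneg[OF sig])
  also have "\<dots> \<le> rho s * sig s a * BR"
    by (rule mult_left_mono[OF R_le_BR]) (simp add: rho_nonneg pol_nonneg[OF sig])
  finally show ?case by (simp add: al_0 mult.commute)
next
  case (Suc n)
  have "\<bar>Cw sig (Suc n) s a\<bar> \<le> (\<Sum>s0\<in>-Sbot. \<Sum>a0\<in>UNIV. \<bar>(Cw sig n s0 a0 + al sig n s0 a0 * R s) * P s0 a0 s\<bar>) * sig s a"
  proof -
    have "\<bar>Cw sig (Suc n) s a\<bar> = \<bar>\<Sum>s0\<in>-Sbot. \<Sum>a0\<in>UNIV. (Cw sig n s0 a0 + al sig n s0 a0 * R s) * P s0 a0 s\<bar> * sig s a"
      unfolding Cw_Suc abs_mult using pol_nonneg[OF sig, of s a] by simp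
    also have "\<dots> \<le> (\<Sum>s0\<in>-Sbot. \<Sum>a0\<in>UNIV. \<bar>(Cw sig n s0 a0 + al sig n s0 a0 * R s) * P s0 a0 s\<bar>) * sig s a"
      by (intro mult_right_mono order.trans[OF sum_abs] sum_mono sum_abs) (simp add: pol_nonneg[OF sig])
    finally show ?thesis .
  qed
  also have "\<dots> \<le> (\<Sum>s0\<in>-Sbot. \<Sum>a0\<in>UNIV. (real (Suc (Suc n)) * BR * al sig n s0 a0) * P s0 a0 s) * sig s a"
  proof (intro mult_right_mono sum_mono)
    fix s0 a0
    have "\<bar>Cw sig n s0 a0 + al sig n s0 a0 * R s\<bar> \<le> \<bar>Cw sig n s0 a0\<bar> + \<bar>al sig n s0 a0 * R s\<bar>"
      by (rule abs_triangle_ineq)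
    also have "\<bar>al sig n s0 a0 * R s\<bar> = al sig n s0 a0 * \<bar>R s\<bar>"
      by (simp add: abs_mult al_nonneg[OF sig])
    also have "\<dots> \<le> al sig n s0 a0 * BR" by (rule mult_left_mono[OF R_le_BR al_nonneg[OF sig]])
    finally have "\<bar>Cw sig n s0 a0 + al sig n s0 a0 * R s\<bar> \<le> real (Suc n) * BR * al sig n s0 a0 + al sig n s0 a0 * BR"
      using Suc.IH[of s0 a0] by linarith
    also have "\<dots> = real (Suc (Suc n)) * BR * al sig n s0 a0" by (simp add: algebra_simps)
    finally have X: "\<bar>Cw sig n s0 a0 + al sig n s0 a0 * R s\<bar> \<le> real (Suc (Suc n)) * BR * al sig n s0 a0" .
    have "\<bar>(Cw sig n s0 a0 + al sig n s0 a0 * R s) * P s0 a0 s\<bar> = \<bar>Cw sig n s0 a0 + al sig n s0 a0 * R s\<bar> * P s0 a0 s"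
      by (simp add: abs_mult P_nonneg)
    also have "\<dots> \<le> real (Suc (Suc n)) * BR * al sig n s0 a0 * P s0 a0 s"
      by (rule mult_right_mono[OF X P_nonneg])
    finally show "\<bar>(Cw sig n s0 a0 + al sig n s0 a0 * R s) * P s0 a0 s\<bar> \<le> real (Suc (Suc n)) * BR * al sig n s0 a0 * P s0 a0 s" .
  qed (simp add: pol_nonneg[OF sig])
  also have "\<dots> = real (Suc (Suc n)) * BR * al sig (Suc n) s a"
  proof -
    have "(\<Sum>s0\<in>-Sbot. \<Sum>a0\<in>UNIV. real (Suc (Suc n)) * BR * al sig n s0 a0 * P s0 a0 s)
       = real (Suc (Suc n)) * BR * (\<Sum>s0\<in>-Sbot. \<Sum>a0\<in>UNIV. al sig n s0 a0 * P s0 a0 s)"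
      by (simp add: sum_distrib_left mult.assoc)
    then show ?thesis by (simp add: al_Suc)
  qed
  finally show ?case .
qed

end


context elp begin

definition rbar :: "'s \<Rightarrow> 'a \<Rightarrow> real" where
  "rbar s a = (\<Sum>s'\<in>UNIV. P s a s' * R s')"

lemma pol_collapse: "is_policy sig \<Longrightarrow> (\<Sum>s'\<in>A. \<Sum>a'\<in>UNIV. F s' * sig s' a') = (\<Sum>s'\<in>A. F s')"
  by (simp add: sum_distrib_left[symmetric] pol_sum)

lemma rr_Suc:
  assumes sig: "is_policy sig"
  shows "rr sig (Suc n) = (\<Sum>s\<in>-Sbot. \<Sum>a\<in>UNIV. al sig n s a * rbar s a)"
proof -
  have "rr sig (Suc n) = (\<Sum>s'\<in>UNIV. \<Sum>a'\<in>UNIV. ((\<Sum>s\<in>-Sbot. \<Sum>a\<in>UNIV. al sig n s a * P s a s') * R s') * sig s' a')"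
    unfolding rr_def by (intro sum.cong refl) (simp add: al_Suc mult_ac)
  also have "\<dots> = (\<Sum>s'\<in>UNIV. (\<Sum>s\<in>-Sbot. \<Sum>a\<in>UNIV. al sig n s a * P s a s') * R s')"
    by (rule pol_collapse[OF sig])
  also have "\<dots> = (\<Sum>s'\<in>UNIV. \<Sum>s\<in>-Sbot. \<Sum>a\<in>UNIV. al sig n s a * (P s a s' * R s'))"
    by (simp add: sum_distrib_right mult.assoc)
  also have "\<dots> = (\<Sum>s\<in>-Sbot. \<Sum>a\<in>UNIV. \<Sum>s'\<in>UNIV. al sig n s a * (P s a s' * R s'))"
    by (rule swap3)
  also have "\<dots> = (\<Sum>s\<in>-Sbot. \<Sum>a\<in>UNIV. al sig n s a * rbar s a)"
    by (simp add: rbar_def sum_distrib_left)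
  finally show ?thesis .
qed

definition cc :: "('s \<Rightarrow> 'a \<Rightarrow> real) \<Rightarrow> nat \<Rightarrow> real" where
  "cc sig n = (\<Sum>s\<in>-Sbot. \<Sum>a\<in>UNIV. Cw sig n s a)"
definition ee :: "('s \<Rightarrow> 'a \<Rightarrow> real) \<Rightarrow> nat \<Rightarrow> real" where
  "ee sig n = (\<Sum>s\<in>Sbot. \<Sum>a\<in>UNIV. Cw sig n s a)"

lemma ee_cc: "ee sig n + cc sig n = (\<Sum>s\<in>UNIV. \<Sum>a\<in>UNIV. Cw sig n s a)"
  unfolding ee_def cc_def by (rule sum_UNIV_split[symmetric])

lemma ee_cc_0: "is_policy sig \<Longrightarrow> ee sig 0 + cc sig 0 = rr sig 0"
  unfolding ee_cc by (simp add: rr_def Cw_0 al_0)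

lemma ee_cc_Suc:
  assumes sig: "is_policy sig"
  shows "ee sig (Suc n) + cc sig (Suc n) = cc sig n + rr sig (Suc n)"
proof -
  have "ee sig (Suc n) + cc sig (Suc n) = (\<Sum>s'\<in>UNIV. \<Sum>a'\<in>UNIV. (\<Sum>s\<in>-Sbot. \<Sum>a\<in>UNIV. (Cw sig n s a + al sig n s a * R s') * P s a s') * sig s' a')"
    unfolding ee_cc by (simp add: Cw_Suc)
  also have "\<dots> = (\<Sum>s'\<in>UNIV. \<Sum>s\<in>-Sbot. \<Sum>a\<in>UNIV. (Cw sig n s a + al sig n s a * R s') * P s a s')"
    by (rule pol_collapse[OF sig])
  also have "\<dots> = (\<Sum>s\<in>-Sbot. \<Sum>a\<in>UNIV. \<Sum>s'\<in>UNIV. Cw sig n s a * P s a s' + al sig n s a * (P s a s' * R s'))"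
    by (subst swap3) (intro sum.cong refl, simp add: algebra_simps)
  also have "\<dots> = (\<Sum>s\<in>-Sbot. \<Sum>a\<in>UNIV. Cw sig n s a) + (\<Sum>s\<in>-Sbot. \<Sum>a\<in>UNIV. al sig n s a * rbar s a)"
    by (simp add: sum.distrib sum_distrib_left[symmetric] P_sum rbar_def)
  also have "\<dots> = cc sig n + rr sig (Suc n)" by (simp add: cc_def rr_Suc[OF sig])
  finally show ?thesis .
qed

lemma ee_partial:
  assumes sig: "is_policy sig"
  shows "(\<Sum>k<Suc n. ee sig k) + cc sig n = (\<Sum>k<Suc n. rr sig k)"
proof (induction n)
  case 0 then show ?case using ee_cc_0[OF sig] by simp
next
  case (Suc n)
  then show ?case using ee_cc_Suc[OF sig, of n] by simp
qed

lemma tot_facts: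
  assumes sig: "is_policy sig"
  shows "summable (tot sig)" "tot sig \<longlonglongrightarrow> 0" "(\<lambda>n. real n * tot sig n) \<longlonglongrightarrow> 0"
proof -
  obtain K q where q: "0 < q" "q < 1" "\<And>n. tot sig n \<le> K * q ^ n" using tot_geom[OF sig] by blast
  have t0: "0 \<le> tot sig n" for n unfolding tot_def by (intro sum_nonneg) (simp add: al_nonneg[OF sig])
  have b: "\<bar>tot sig n\<bar> \<le> K * q ^ n" for n using t0[of n] q(3)[of n] by simp
  show "summable (tot sig)" "tot sig \<longlonglongrightarrow> 0" "(\<lambda>n. real n * tot sig n) \<longlonglongrightarrow> 0"
    using geom_facts[OF q(1,2) b] by auto
qed

lemma null_by_tot:
  assumes sig: "is_policy sig" and b: "\<And>n. \<bar>x n\<bar> \<le> C * tot sig n"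
  shows "x \<longlonglongrightarrow> 0" "summable x"
proof -
  have "(\<lambda>n. C * tot sig n) \<longlonglongrightarrow> C * 0" by (intro tendsto_intros tot_facts[OF sig])
  then have l: "(\<lambda>n. C * tot sig n) \<longlonglongrightarrow> 0" by simp
  show "x \<longlonglongrightarrow> 0" by (rule Lim_null_comparison[OF _ l]) (use b in auto)
  have "summable (\<lambda>n. C * tot sig n)" by (intro summable_mult tot_facts[OF sig])
  then show "summable x" by (rule summable_comparison_test[rotated]) (use b in auto)
qed

lemma cc_lim: assumes sig: "is_policy sig" shows "cc sig \<longlonglongrightarrow> 0"
proof -
  have b: "\<bar>cc sig n\<bar> \<le> BR * (real n * tot sig n + tot sig n)" for n
  proof -
    have "\<bar>cc sig n\<bar> \<le> (\<Sum>s\<in>-Sbot. \<Sum>a\<in>UNIV. \<bar>Cw sig n s a\<bar>)"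
      unfolding cc_def by (rule order.trans[OF sum_abs]) (intro sum_mono sum_abs)
    also have "\<dots> \<le> (\<Sum>s\<in>-Sbot. \<Sum>a\<in>UNIV. real (Suc n) * BR * al sig n s a)"
      by (intro sum_mono Cw_bound[OF sig])
    also have "\<dots> = real (Suc n) * BR * alive sig n" by (simp add: alive_def sum_distrib_left)
    also have "\<dots> \<le> real (Suc n) * BR * tot sig n"
      by (rule mult_left_mono[OF alive_le_tot[OF sig]]) (simp add: BR_def sum_nonneg)
    also have "\<dots> = BR * (real n * tot sig n + tot sig n)" by (simp add: algebra_simps)
    finally show ?thesis .
  qed
  have "(\<lambda>n. BR * (real n * tot sig n + tot sig n)) \<longlonglongrightarrow> BR * (0 + 0)"
    by (intro tendsto_intros tot_facts[OF sig])
  then have l: "(\<lambda>n. BR * (real n * tot sig n + tot sig n)) \<longlonglongrightarrow> 0" by simp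
  show ?thesis by (rule Lim_null_comparison[OF _ l]) (use b in auto)
qed

lemma rr_summable: assumes sig: "is_policy sig" shows "summable (rr sig)"
proof -
  have "\<bar>rr sig n\<bar> \<le> BR * tot sig n" for n
    unfolding rr_def by (rule weighted_bound[OF sig]) (simp add: R_le_BR)
  then show ?thesis using null_by_tot[OF sig] by blast
qed

lemma J_sums: assumes sig: "is_policy sig" shows "rr sig sums J P R rho Sbot sig"
proof -
  have "(\<lambda>n. \<Sum>k<Suc n. rr sig k) \<longlonglongrightarrow> suminf (rr sig)"
    using summable_LIMSEQ[OF rr_summable[OF sig]] by (rule LIMSEQ_Suc)
  then have "(\<lambda>n. (\<Sum>k<Suc n. rr sig k) - cc sig n) \<longlonglongrightarrow> suminf (rr sig) - 0"
    by (intro tendsto_intros cc_lim[OF sig])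
  then have "(\<lambda>n. \<Sum>k<Suc n. ee sig k) \<longlonglongrightarrow> suminf (rr sig)"
  proof -
    have "(\<lambda>n. \<Sum>k<Suc n. ee sig k) = (\<lambda>n. (\<Sum>k<Suc n. rr sig k) - cc sig n)"
      by (rule ext) (use ee_partial[OF sig] in \<open>simp only: eq_diff_eq\<close>)
    then show ?thesis using \<open>(\<lambda>n. (\<Sum>k<Suc n. rr sig k) - cc sig n) \<longlonglongrightarrow> suminf (rr sig) - 0\<close> by simp
  qed
  then have "(\<lambda>n. \<Sum>k<n. ee sig k) \<longlonglongrightarrow> suminf (rr sig)" by (rule LIMSEQ_imp_Suc)
  then have "ee sig sums suminf (rr sig)" by (simp add: sums_def)
  then have "(\<lambda>n. \<Sum>s\<in>Sbot. \<Sum>a\<in>UNIV. W sig (\<lambda>xs. \<Sum>x\<leftarrow>xs. R (fst x)) n s a) sums suminf (rr sig)"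
    by (simp add: ee_def[abs_def] Cw_def[abs_def])
  then have "J P R rho Sbot sig = suminf (rr sig)"
    unfolding J_def by (rule episode_exp_eq)
  then show ?thesis using summable_sums[OF rr_summable[OF sig]] by simp
qed

end


context elp begin

definition lam :: "('s \<Rightarrow> 'a \<Rightarrow> real) \<Rightarrow> 's \<Rightarrow> 'a \<Rightarrow> real" where
  "lam sig s a = suminf (\<lambda>n. al sig n s a)"
definition EQ :: "('s \<Rightarrow> 'a \<Rightarrow> real) \<Rightarrow> ('s \<Rightarrow> 'a \<Rightarrow> real) \<Rightarrow> real" where
  "EQ sig Q = episode_exp P rho Sbot sig (\<lambda>xs. Q (fst (last xs)) (snd (last xs)))"
definition TQ :: "('s \<Rightarrow> 'a \<Rightarrow> real) \<Rightarrow> ('s \<Rightarrow> 'a \<Rightarrow> real) \<Rightarrow> 's \<Rightarrow> 'a \<Rightarrow> real" where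
  "TQ sig Q s a = rbar s a + Mop sig Q s a"
definition BQ :: "('s \<Rightarrow> 'a \<Rightarrow> real) \<Rightarrow> real" where
  "BQ Q = (\<Sum>s\<in>UNIV. \<Sum>a\<in>UNIV. \<bar>Q s a\<bar>)"

lemma Q_le_BQ: "\<bar>Q s a\<bar> \<le> BQ Q"
proof -
  have "\<bar>Q s a\<bar> \<le> (\<Sum>a\<in>UNIV. \<bar>Q s a\<bar>)" by (rule member_le_sum) auto
  also have "\<dots> \<le> BQ Q" unfolding BQ_def by (rule member_le_sum) (auto intro: sum_nonneg)
  finally show ?thesis .
qed

lemma W_last: "W pol (\<lambda>xs. Q (fst (last xs)) (snd (last xs))) n s a = al pol n s a * Q s a"
proof -
  have "W pol (\<lambda>xs. Q (fst (last xs)) (snd (last xs))) n s a = (\<Sum>xs\<in>LL (Suc n) s a. traj_prob P rho pol xs * Q s a)"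
    unfolding W_def by (intro sum.cong refl) (auto simp: LL_def)
  then show ?thesis by (simp add: al_def W_def sum_distrib_right)
qed

lemma EQ_sums:
  assumes sig: "is_policy sig"
  shows "(\<lambda>n. \<Sum>s\<in>Sbot. \<Sum>a\<in>UNIV. al sig n s a * Q s a) sums EQ sig Q"
proof -
  have bd: "\<bar>\<Sum>s\<in>Sbot. \<Sum>a\<in>UNIV. al sig n s a * Q s a\<bar> \<le> BQ Q * tot sig n" for n
    by (rule weighted_bound[OF sig Q_le_BQ])
  have sm: "summable (\<lambda>n. \<Sum>s\<in>Sbot. \<Sum>a\<in>UNIV. al sig n s a * Q s a)"
    by (rule null_by_tot(2)[OF sig bd])
  then have "(\<lambda>n. \<Sum>s\<in>Sbot. \<Sum>a\<in>UNIV. W sig (\<lambda>xs. Q (fst (last xs)) (snd (last xs))) n s a)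
      sums (\<Sum>n. \<Sum>s\<in>Sbot. \<Sum>a\<in>UNIV. al sig n s a * Q s a)"
    unfolding W_last by (rule summable_sums)
  then have "EQ sig Q = (\<Sum>n. \<Sum>s\<in>Sbot. \<Sum>a\<in>UNIV. al sig n s a * Q s a)"
    unfolding EQ_def by (rule episode_exp_eq)
  then show ?thesis using summable_sums[OF sm] by simp
qed

lemma al_summable: "is_policy sig \<Longrightarrow> summable (\<lambda>n. al sig n s a)"
proof -
  assume sig: "is_policy sig"
  have bd: "\<bar>al sig n s a\<bar> \<le> 1 * tot sig n" for n using al_le_tot[OF sig] al_nonneg[OF sig] by simp
  show ?thesis by (rule null_by_tot(2)[OF sig bd])
qed

lemma rr_0: "is_policy sig \<Longrightarrow> rr sig 0 = (\<Sum>s\<in>UNIV. rho s * R s)"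
  unfolding rr_def al_0 by (intro sum.cong refl) (simp add: sum_distrib_left[symmetric] sum_distrib_right[symmetric] pol_sum mult_ac)

definition vv :: "('s \<Rightarrow> 'a \<Rightarrow> real) \<Rightarrow> ('s \<Rightarrow> 'a \<Rightarrow> real) \<Rightarrow> nat \<Rightarrow> real" where
  "vv sig Q n = (\<Sum>s\<in>-Sbot. \<Sum>a\<in>UNIV. al sig n s a * Q s a)"

lemma restart_rbar: "is_policy sig \<Longrightarrow> s \<in> Sbot \<Longrightarrow> rbar s a = rr sig 0"
  by (simp add: rbar_def rr_0 restart)

lemma restart_Mop: "s \<in> Sbot \<Longrightarrow> Mop sig Q s a = vv sig Q 0"
  by (simp add: Mop_def vv_def al_0 restart sum_distrib_left mult.assoc)

lemma X_eq:
  assumes sig: "is_policy sig"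
  shows "(\<Sum>s\<in>Sbot. \<Sum>a\<in>UNIV. al sig n s a * Q s a) + (\<Sum>s\<in>UNIV. \<Sum>a\<in>UNIV. al sig n s a * (TQ sig Q s a - Q s a))
    = rr sig (Suc n) + hS sig n * (rr sig 0 + vv sig Q 0) + (vv sig Q (Suc n) - vv sig Q n)"
proof -
  have 1: "(\<Sum>s\<in>UNIV. \<Sum>a\<in>UNIV. al sig n s a * (TQ sig Q s a - Q s a))
      = (\<Sum>s\<in>UNIV. \<Sum>a\<in>UNIV. al sig n s a * TQ sig Q s a) - (\<Sum>s\<in>UNIV. \<Sum>a\<in>UNIV. al sig n s a * Q s a)"
    by (simp add: right_diff_distrib sum_subtractf)
  have 2: "(\<Sum>s\<in>UNIV. \<Sum>a\<in>UNIV. al sig n s a * Q s a) = (\<Sum>s\<in>Sbot. \<Sum>a\<in>UNIV. al sig n s a * Q s a) + vv sig Q n"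
    unfolding vv_def by (rule sum_UNIV_split)
  have 3: "(\<Sum>s\<in>UNIV. \<Sum>a\<in>UNIV. al sig n s a * TQ sig Q s a)
     = (\<Sum>s\<in>Sbot. \<Sum>a\<in>UNIV. al sig n s a * TQ sig Q s a) + (\<Sum>s\<in>-Sbot. \<Sum>a\<in>UNIV. al sig n s a * TQ sig Q s a)"
    by (rule sum_UNIV_split)
  have 4: "(\<Sum>s\<in>Sbot. \<Sum>a\<in>UNIV. al sig n s a * TQ sig Q s a) = hS sig n * (rr sig 0 + vv sig Q 0)"
  proof -
    have "(\<Sum>s\<in>Sbot. \<Sum>a\<in>UNIV. al sig n s a * TQ sig Q s a) = (\<Sum>s\<in>Sbot. \<Sum>a\<in>UNIV. al sig n s a * (rr sig 0 + vv sig Q 0))"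
      by (intro sum.cong refl) (simp add: TQ_def restart_rbar[OF sig] restart_Mop)
    then show ?thesis by (simp add: hS_def sum_distrib_right)
  qed
  have 5: "(\<Sum>s\<in>-Sbot. \<Sum>a\<in>UNIV. al sig n s a * TQ sig Q s a) = rr sig (Suc n) + vv sig Q (Suc n)"
    unfolding TQ_def distrib_left sum.distrib rr_Suc[OF sig] vv_def adjoint ..
  show ?thesis unfolding 1 2 3 4 5 by simp
qed

lemma identity:
  assumes sig: "is_policy sig"
  shows "EQ sig Q + (\<Sum>s\<in>UNIV. \<Sum>a\<in>UNIV. lam sig s a * (TQ sig Q s a - Q s a)) = J P R rho Sbot sig"
proof -
  let ?X = "\<lambda>n. (\<Sum>s\<in>Sbot. \<Sum>a\<in>UNIV. al sig n s a * Q s a) + (\<Sum>s\<in>UNIV. \<Sum>a\<in>UNIV. al sig n s a * (TQ sig Q s a - Q s a))"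
  have "?X sums (EQ sig Q + (\<Sum>s\<in>UNIV. \<Sum>a\<in>UNIV. lam sig s a * (TQ sig Q s a - Q s a)))"
  proof (rule sums_add[OF EQ_sums[OF sig]])
    show "(\<lambda>n. \<Sum>s\<in>UNIV. \<Sum>a\<in>UNIV. al sig n s a * (TQ sig Q s a - Q s a)) sums (\<Sum>s\<in>UNIV. \<Sum>a\<in>UNIV. lam sig s a * (TQ sig Q s a - Q s a))"
      unfolding lam_def by (intro sums_sum sums_mult2 summable_sums al_summable[OF sig])
  qed
  moreover have "?X sums J P R rho Sbot sig"
  proof -
    have vlim: "vv sig Q \<longlonglongrightarrow> 0"
    proof -
      have bd: "\<bar>vv sig Q n\<bar> \<le> BQ Q * tot sig n" for n
        unfolding vv_def by (rule weighted_bound[OF sig Q_le_BQ])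
      show ?thesis by (rule null_by_tot(1)[OF sig bd])
    qed
    have a: "(\<lambda>n. rr sig (Suc n)) sums (J P R rho Sbot sig - rr sig 0)"
      using J_sums[OF sig] sums_Suc_iff[of "rr sig" "J P R rho Sbot sig - rr sig 0"] by simp
    have b: "(\<lambda>n. hS sig n * (rr sig 0 + vv sig Q 0)) sums (1 * (rr sig 0 + vv sig Q 0))"
      by (rule sums_mult2[OF hS_sums[OF sig]])
    have c: "(\<lambda>n. vv sig Q (Suc n) - vv sig Q n) sums (0 - vv sig Q 0)"
      by (rule telescope_sums[OF vlim])
    have "(\<lambda>n. rr sig (Suc n) + hS sig n * (rr sig 0 + vv sig Q 0) + (vv sig Q (Suc n) - vv sig Q n))
       sums (J P R rho Sbot sig - rr sig 0 + 1 * (rr sig 0 + vv sig Q 0) + (0 - vv sig Q 0))"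
      by (intro sums_add a b c)
    then show ?thesis unfolding X_eq[OF sig] by simp
  qed
  ultimately show ?thesis by (simp add: sums_unique2)
qed

end


context elp begin

lemma Mop'_bound:
  assumes sig: "is_policy sig" and hb: "\<And>s a. \<bar>h s a\<bar> \<le> B"
  shows "\<bar>Mop' sig n h s a\<bar> \<le> B * u sig n s a"
proof -
  have "Mop' sig n h s a \<le> Mop' sig n (\<lambda>s a. B * 1) s a"
    by (rule Mop'_mono[OF sig]) (use hb in \<open>simp add: abs_le_iff\<close>)
  also have "\<dots> = B * u sig n s a" unfolding u_def by (rule Mop'_scale)
  finally have up: "Mop' sig n h s a \<le> B * u sig n s a" .
  have hl: "\<And>s a. -B \<le> h s a" using hb by (metis abs_le_D2 minus_le_iff)
  have "Mop' sig n (\<lambda>s a. (-B) * 1) s a \<le> Mop' sig n h s a"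
    by (rule Mop'_mono[OF sig]) (simp add: hl)
  moreover have "Mop' sig n (\<lambda>s a. (-B) * 1) s a = - B * u sig n s a" unfolding u_def by (rule Mop'_scale)
  ultimately have "- (B * u sig n s a) \<le> Mop' sig n h s a" by simp
  with up show ?thesis by (simp add: abs_le_iff)
qed

lemma u_facts:
  assumes sig: "is_policy sig"
  shows "summable (\<lambda>n. u sig n s a)"
proof -
  obtain q where q: "0 < q" "q < 1" "\<And>n s a. u sig n s a \<le> 2 * q ^ n" using u_geom[OF sig] by blast
  have bd: "\<bar>u sig n s a\<bar> \<le> 2 * q ^ n" for n using q(3)[of n s a] u_nonneg[OF sig, of n s a] by simp
  show ?thesis by (rule geom_facts(1)[OF q(1,2) bd])
qed

lemma Mop'_null:
  assumes sig: "is_policy sig" and hb: "\<And>s a. \<bar>h s a\<bar> \<le> B"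
  shows "summable (\<lambda>n. Mop' sig n h s a)" "(\<lambda>n. Mop' sig n h s a) \<longlonglongrightarrow> 0"
proof -
  have b: "norm (Mop' sig n h s a) \<le> B * u sig n s a" for n using Mop'_bound[OF sig hb] by simp
  show "summable (\<lambda>n. Mop' sig n h s a)"
    by (rule summable_comparison_test[OF _ summable_mult[OF u_facts[OF sig]]]) (use b in auto)
  have "(\<lambda>n. B * u sig n s a) \<longlonglongrightarrow> B * 0" by (intro tendsto_intros u_lim0[OF sig])
  then have l: "(\<lambda>n. B * u sig n s a) \<longlonglongrightarrow> 0" by simp
  show "(\<lambda>n. Mop' sig n h s a) \<longlonglongrightarrow> 0" by (rule Lim_null_comparison[OF _ l]) (use b in auto)
qed

definition BRb :: real where "BRb = BQ rbar"

definition Qv :: "('s \<Rightarrow> 'a \<Rightarrow> real) \<Rightarrow> 's \<Rightarrow> 'a \<Rightarrow> real" where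
  "Qv sig s a = suminf (\<lambda>n. Mop' sig n rbar s a)"

lemma Qv_sums: "is_policy sig \<Longrightarrow> (\<lambda>n. Mop' sig n rbar s a) sums Qv sig s a"
  unfolding Qv_def by (rule summable_sums, rule Mop'_null(1), assumption, rule Q_le_BQ)

lemma Qv_fix:
  assumes sig: "is_policy sig"
  shows "Qv sig s a = rbar s a + Mop sig (Qv sig) s a"
proof -
  have "(\<lambda>n. Mop' sig (Suc n) rbar s a) sums Mop sig (Qv sig) s a"
    unfolding Mop'_Suc Mop_def
    by (intro sums_sum sums_mult Qv_sums[OF sig])
  then have "(\<lambda>n. Mop' sig n rbar s a) sums (Mop sig (Qv sig) s a + Mop' sig 0 rbar s a)"
    by (rule sums_Suc)
  then show ?thesis using sums_unique2[OF Qv_sums[OF sig]] by (simp add: Mop'_0)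
qed

lemma Qv_super:
  assumes sig: "is_policy sig" and sub: "\<And>s a. Q s a \<le> rbar s a + Mop sig Q s a"
  shows "Q s a \<le> Qv sig s a"
proof -
  have step: "Q s a \<le> (\<Sum>k<n. Mop' sig k rbar s a) + Mop' sig n Q s a" for n s a
  proof (induction n arbitrary: s a)
    case 0 then show ?case by (simp add: Mop'_0)
  next
    case (Suc n)
    have "Mop' sig n Q s a \<le> Mop' sig n (\<lambda>s a. rbar s a + Mop sig Q s a) s a"
      by (rule Mop'_mono[OF sig sub])
    also have "\<dots> = Mop' sig n rbar s a + Mop' sig (Suc n) Q s a"
      by (simp add: Mop'_add Mop'_Suc')
    finally show ?case using Suc[of s a] by simp
  qed
  have "(\<lambda>n. (\<Sum>k<n. Mop' sig k rbar s a) + Mop' sig n Q s a) \<longlonglongrightarrow> Qv sig s a + 0"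
    by (intro tendsto_intros Mop'_null(2)[OF sig Q_le_BQ])
       (use Qv_sums[OF sig, of s a] in \<open>simp add: sums_def\<close>)
  then have "(\<lambda>n. (\<Sum>k<n. Mop' sig k rbar s a) + Mop' sig n Q s a) \<longlonglongrightarrow> Qv sig s a" by simp
  then show ?thesis by (rule LIMSEQ_le_const) (use step in auto)
qed

definition det :: "('s \<Rightarrow> 'a) \<Rightarrow> 's \<Rightarrow> 'a \<Rightarrow> real" where
  "det phi s a = (if a = phi s then 1 else 0)"

lemma det_policy: "is_policy (det phi)"
  unfolding is_policy_def det_def by simp

lemma Mop_det: "Mop (det phi) h s a = (\<Sum>s'\<in>-Sbot. P s a s' * h s' (phi s'))"
  unfolding Mop_def det_def by (simp add: if_distrib[of "\<lambda>x. x * _"] cong: if_cong)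

lemma exists_pred:
  assumes "s1 \<notin> Sbot"
  shows "\<exists>s a. P s a s1 > 0"
proof -
  obtain pp xs where pp: "is_policy pp" and xs: "xs \<noteq> []" "fst (last xs) = s1"
      "traj_prob P rho pp xs > 0"
    using reach[of s1] by blast
  obtain b where lb: "last xs = (s1, b)" using xs(2) by (metis prod.collapse)
  define ys where "ys = butlast xs"
  have xs_eq: "xs = ys @ [(s1,b)]" using xs(1) lb unfolding ys_def by (metis append_butlast_last_id)
  define F where "F = (if ys = [] then rho s1 else traj_prob P rho pp ys * P (fst (last ys)) (snd (last ys)) s1)"
  have "traj_prob P rho pp xs = F * pp s1 b" unfolding xs_eq F_def by (rule traj_prob_snoc')
  with xs(3) pol_nonneg[OF pp, of s1 b] have Fpos: "F > 0"
    by (metis less_eq_real_def mult_nonpos_nonneg not_le)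
  show ?thesis
  proof (cases "ys = []")
    case True
    then have "rho s1 > 0" using Fpos by (simp add: F_def)
    obtain s0 where "s0 \<in> Sbot" using Sbot_ne by blast
    then have "P s0 undefined s1 > 0" using \<open>rho s1 > 0\<close> by (simp add: restart)
    then show ?thesis by blast
  next
    case False
    then have "traj_prob P rho pp ys * P (fst (last ys)) (snd (last ys)) s1 > 0" using Fpos by (simp add: F_def)
    moreover have "0 \<le> traj_prob P rho pp ys" by (rule tp_nonneg[OF pp])
    ultimately have "P (fst (last ys)) (snd (last ys)) s1 \<noteq> 0" by auto
    then have "P (fst (last ys)) (snd (last ys)) s1 > 0" using P_nonneg[of "fst (last ys)" "snd (last ys)" s1] by linarith
    then show ?thesis by blast
  qed
qed

lemma greedy_exists:
  "\<exists>phi. \<forall>s a. s \<notin> Sbot \<longrightarrow> Qv (det phi) s a \<le> Qv (det phi) s (phi s)"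
proof -
  define F where "F phi = (\<Sum>s\<in>UNIV. \<Sum>a\<in>UNIV. Qv (det phi) s a)" for phi
  have "Max (F ` UNIV) \<in> F ` UNIV" by (rule Max_in) auto
  then obtain phi where phimax: "F phi = Max (F ` UNIV)" by (metis imageE)
  have maxF: "F psi \<le> F phi" for psi unfolding phimax by (rule Max_ge) auto
  show ?thesis
  proof (rule exI[of _ phi], rule ccontr)
    assume "\<not> (\<forall>s a. s \<notin> Sbot \<longrightarrow> Qv (det phi) s a \<le> Qv (det phi) s (phi s))"
    then obtain s1 a1 where s1: "s1 \<notin> Sbot" and gt: "Qv (det phi) s1 (phi s1) < Qv (det phi) s1 a1"
      by (auto simp: not_le)
    define phi' where "phi' = phi(s1 := a1)"
    define Q where "Q = Qv (det phi)"
    define Q' where "Q' = Qv (det phi')"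
    define d where "d = Q s1 a1 - Q s1 (phi s1)"
    have dpos: "d > 0" using gt by (simp add: d_def Q_def)
    have diff: "Mop (det phi') Q s a - Mop (det phi) Q s a = P s a s1 * d" for s a
    proof -
      have "Mop (det phi') Q s a - Mop (det phi) Q s a = (\<Sum>s'\<in>-Sbot. P s a s' * (Q s' (phi' s') - Q s' (phi s')))"
        by (simp add: Mop_det sum_subtractf right_diff_distrib)
      also have "\<dots> = (\<Sum>s'\<in>-Sbot. if s' = s1 then P s a s1 * d else 0)"
        by (intro sum.cong refl) (simp add: phi'_def d_def)
      also have "\<dots> = P s a s1 * d" using s1 by simp
      finally show ?thesis .
    qed
    have fixQ: "Q s a = rbar s a + Mop (det phi) Q s a" for s a unfolding Q_def by (rule Qv_fix[OF det_policy])
    have fixQ': "Q' s a = rbar s a + Mop (det phi') Q' s a" for s a unfolding Q'_def by (rule Qv_fix[OF det_policy])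
    have sub: "Q s a \<le> rbar s a + Mop (det phi') Q s a" for s a
      using fixQ[of s a] diff[of s a] dpos P_nonneg[of s a s1] by (simp add: algebra_simps)
    have le: "Q s a \<le> Q' s a" for s a unfolding Q'_def by (rule Qv_super[OF det_policy sub])
    obtain s0 a0 where P0: "P s0 a0 s1 > 0" using exists_pred[OF s1] by blast
    have lt: "Q s0 a0 < Q' s0 a0"
    proof -
      have "Q s0 a0 < rbar s0 a0 + Mop (det phi') Q s0 a0"
      proof -
        have "0 < P s0 a0 s1 * d" using dpos P0 by simp
        then show ?thesis using fixQ[of s0 a0] diff[of s0 a0] by linarith
      qed
      also have "\<dots> \<le> rbar s0 a0 + Mop (det phi') Q' s0 a0"
        using Mop_mono[OF det_policy le] by simp
      also have "\<dots> = Q' s0 a0" by (rule fixQ'[symmetric])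
      finally show ?thesis .
    qed
    have "F phi < F phi'"
      unfolding F_def Q_def[symmetric] Q'_def[symmetric]
    proof (rule sum_strict_mono_ex1)
      show "\<forall>s\<in>UNIV. (\<Sum>a\<in>UNIV. Q s a) \<le> (\<Sum>a\<in>UNIV. Q' s a)" by (auto intro: sum_mono le)
      show "\<exists>s\<in>UNIV. (\<Sum>a\<in>UNIV. Q s a) < (\<Sum>a\<in>UNIV. Q' s a)"
        by (rule bexI[of _ s0], rule sum_strict_mono_ex1) (use le lt in auto)
    qed simp
    with maxF[of phi'] show False by simp
  qed
qed

end


context elp begin

lemma bellman_eq: "bellman P R Sbot Q s a = rbar s a + (\<Sum>s'\<in>-Sbot. P s a s' * Max (range (Q s')))"
proof -
  have "bellman P R Sbot Q s a = (\<Sum>s'\<in>UNIV. P s a s' * R s') + (\<Sum>s'\<in>UNIV. P s a s' * (if s' \<notin> Sbot then Max (range (Q s')) else 0))"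
    unfolding bellman_def by (simp add: distrib_left sum.distrib)
  also have "(\<Sum>s'\<in>UNIV. P s a s' * (if s' \<notin> Sbot then Max (range (Q s')) else 0)) = (\<Sum>s'\<in>-Sbot. P s a s' * Max (range (Q s')))"
    by (subst sum_UNIV_split[where A=Sbot]) simp
  finally show ?thesis by (simp add: rbar_def)
qed

lemma Q_le_Max: "(Q :: 's \<Rightarrow> 'a \<Rightarrow> real) s a \<le> Max (range (Q s))"
  by (rule Max_ge) auto

lemma TQ_le_bellman:
  assumes sig: "is_policy sig"
  shows "TQ sig Q s a \<le> bellman P R Sbot Q s a"
proof -
  have "(\<Sum>a'\<in>UNIV. sig s' a' * Q s' a') \<le> Max (range (Q s'))" for s'
  proof -
    have "(\<Sum>a'\<in>UNIV. sig s' a' * Q s' a') \<le> (\<Sum>a'\<in>UNIV. sig s' a' * Max (range (Q s')))"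
      by (intro sum_mono mult_left_mono Q_le_Max pol_nonneg[OF sig])
    also have "\<dots> = (\<Sum>a'\<in>UNIV. sig s' a') * Max (range (Q s'))" by (rule sum_distrib_right[symmetric])
    finally show ?thesis by (simp add: pol_sum[OF sig])
  qed
  then have "Mop sig Q s a \<le> (\<Sum>s'\<in>-Sbot. P s a s' * Max (range (Q s')))"
    unfolding Mop_def by (intro sum_mono mult_left_mono P_nonneg)
  then show ?thesis unfolding TQ_def bellman_eq by simp
qed

lemma lagr_eq: "lagrangian P R rho Sbot sig Q l = EQ sig Q + (\<Sum>s\<in>UNIV. \<Sum>a\<in>UNIV. l s a * (bellman P R Sbot Q s a - Q s a))"
  by (simp add: lagrangian_def EQ_def)

lemma lam_nonneg: "is_policy sig \<Longrightarrow> 0 \<le> lam sig s a"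
  unfolding lam_def by (rule suminf_nonneg[OF al_summable]) (auto intro: al_nonneg)

lemma dual_bound:
  assumes mu: "is_policy mu"
  shows "J P R rho Sbot mu \<le> lagrangian P R rho Sbot mu Q (lam mu)"
proof -
  have "J P R rho Sbot mu = EQ mu Q + (\<Sum>s\<in>UNIV. \<Sum>a\<in>UNIV. lam mu s a * (TQ mu Q s a - Q s a))"
    by (rule identity[OF mu, symmetric])
  also have "\<dots> \<le> EQ mu Q + (\<Sum>s\<in>UNIV. \<Sum>a\<in>UNIV. lam mu s a * (bellman P R Sbot Q s a - Q s a))"
    by (intro add_left_mono sum_mono mult_left_mono lam_nonneg[OF mu]) (simp add: TQ_le_bellman[OF mu])
  finally show ?thesis by (simp add: lagr_eq)
qed

lemma primal:
  assumes opt: "is_optimal P R rho Sbot mu"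
  shows "\<exists>Q0. (\<forall>l. lagrangian P R rho Sbot mu Q0 l = EQ mu Q0) \<and> EQ mu Q0 \<le> J P R rho Sbot mu"
proof -
  have mu: "is_policy mu" using opt by (simp add: is_optimal_def)
  obtain phi where greedy: "\<And>s a. s \<notin> Sbot \<Longrightarrow> Qv (det phi) s a \<le> Qv (det phi) s (phi s)"
    using greedy_exists by blast
  define Q0 where "Q0 = Qv (det phi)"
  have fix0: "Q0 s a = rbar s a + Mop (det phi) Q0 s a" for s a unfolding Q0_def by (rule Qv_fix[OF det_policy])
  have bell: "bellman P R Sbot Q0 s a = Q0 s a" for s a
  proof -
    have "Max (range (Q0 s')) = Q0 s' (phi s')" if "s' \<notin> Sbot" for s'
      by (rule Max_eqI) (use greedy[OF that] in \<open>auto simp: Q0_def\<close>)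
    then have "(\<Sum>s'\<in>-Sbot. P s a s' * Max (range (Q0 s'))) = (\<Sum>s'\<in>-Sbot. P s a s' * Q0 s' (phi s'))"
      by (intro sum.cong refl) simp
    then show ?thesis unfolding bellman_eq fix0[of s a] Mop_det by simp
  qed
  have L0: "lagrangian P R rho Sbot mu Q0 l = EQ mu Q0" for l
    by (simp add: lagr_eq bell)
  define c0 where "c0 = rr (det phi) 0 + vv (det phi) Q0 0"
  have termv: "Q0 s a = c0" if "s \<in> Sbot" for s a
    using fix0[of s a] restart_rbar[OF det_policy that] restart_Mop[OF that] by (simp add: c0_def)
  have EQc: "EQ sig Q0 = c0" if sig: "is_policy sig" for sig
  proof -
    have "(\<lambda>n. \<Sum>s\<in>Sbot. \<Sum>a\<in>UNIV. al sig n s a * Q0 s a) = (\<lambda>n. hS sig n * c0)"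
      by (rule ext) (simp add: hS_def termv sum_distrib_right)
    then have "(\<lambda>n. hS sig n * c0) sums EQ sig Q0" using EQ_sums[OF sig, of Q0] by simp
    moreover have "(\<lambda>n. hS sig n * c0) sums (1 * c0)" by (rule sums_mult2[OF hS_sums[OF sig]])
    ultimately show ?thesis by (simp add: sums_unique2)
  qed
  have "EQ (det phi) Q0 = J P R rho Sbot (det phi)"
  proof -
    have "TQ (det phi) Q0 s a = Q0 s a" for s a by (simp add: TQ_def fix0[symmetric])
    then show ?thesis using identity[OF det_policy, of phi Q0] by simp
  qed
  then have "c0 \<le> J P R rho Sbot mu" using EQc[OF det_policy] opt det_policy by (simp add: is_optimal_def)
  then show ?thesis using L0 EQc[OF mu] by blast
qed

end

theorem mainTheorem6:
  fixes P :: "'s::finite \<Rightarrow> 'a::finite \<Rightarrow> 's \<Rightarrow> real"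
    and R :: "'s \<Rightarrow> real" and rho :: "'s \<Rightarrow> real" and Sbot :: "'s set"
    and mu :: "'s \<Rightarrow> 'a \<Rightarrow> real"
  assumes "finite_ELP P R rho Sbot"
    and "is_optimal P R rho Sbot mu"
  shows "(\<exists>Q0. (SUP lam\<in>nonneg_multipliers. ereal (lagrangian P R rho Sbot mu Q0 lam))
                 = (INF Q. SUP lam\<in>nonneg_multipliers. ereal (lagrangian P R rho Sbot mu Q lam)))
       \<and> (\<exists>lam0\<in>nonneg_multipliers. (INF Q. ereal (lagrangian P R rho Sbot mu Q lam0))
                 = (SUP lam\<in>nonneg_multipliers. INF Q. ereal (lagrangian P R rho Sbot mu Q lam)))
       \<and> (INF Q. SUP lam\<in>nonneg_multipliers. ereal (lagrangian P R rho Sbot mu Q lam))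
            = ereal (J P R rho Sbot mu)
       \<and> (SUP lam\<in>nonneg_multipliers. INF Q. ereal (lagrangian P R rho Sbot mu Q lam))
            = ereal (J P R rho Sbot mu)"
proof -
  interpret elp P R rho Sbot by unfold_locales (rule assms(1))
  have mu: "is_policy mu" using assms(2) by (simp add: is_optimal_def)
  let ?L = "\<lambda>Q l. ereal (lagrangian P R rho Sbot mu Q l)"
  let ?J = "ereal (J P R rho Sbot mu)"
  define lam0 where "lam0 = lam mu"
  have lam0: "lam0 \<in> nonneg_multipliers" by (simp add: nonneg_multipliers_def lam0_def lam_nonneg[OF mu])
  have F1: "?J \<le> ?L Q lam0" for Q unfolding lam0_def using dual_bound[OF mu] by simp
  obtain Q0 where Q0: "\<And>l. lagrangian P R rho Sbot mu Q0 l = EQ mu Q0" "EQ mu Q0 \<le> J P R rho Sbot mu"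
    using primal[OF assms(2)] by blast
  have "J P R rho Sbot mu \<le> EQ mu Q0" using F1[of Q0] unfolding Q0(1)[of lam0] by simp
  then have EQ0: "EQ mu Q0 = J P R rho Sbot mu" using Q0(2) by linarith
  have LQ0: "?L Q0 l = ?J" for l unfolding Q0(1)[of l] EQ0 ..
  have ne: "(nonneg_multipliers :: ('s \<Rightarrow> 'a \<Rightarrow> real) set) \<noteq> {}" using lam0 by blast
  have S0: "(SUP l\<in>nonneg_multipliers. ?L Q0 l) = ?J" unfolding LQ0 by (rule SUP_const[OF ne])
  have IS: "(INF Q. SUP l\<in>nonneg_multipliers. ?L Q l) = ?J"
  proof (rule antisym)
    show "(INF Q. SUP l\<in>nonneg_multipliers. ?L Q l) \<le> ?J"
      using INF_lower[of Q0 UNIV "\<lambda>Q. SUP l\<in>nonneg_multipliers. ?L Q l"] S0 by simp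
    show "?J \<le> (INF Q. SUP l\<in>nonneg_multipliers. ?L Q l)"
    proof (rule INF_greatest)
      fix Q show "?J \<le> (SUP l\<in>nonneg_multipliers. ?L Q l)"
        using F1[of Q] SUP_upper[OF lam0, of "?L Q"] by (rule order.trans)
    qed
  qed
  have I0: "(INF Q. ?L Q lam0) = ?J"
  proof (rule antisym)
    show "(INF Q. ?L Q lam0) \<le> ?J" using INF_lower[of Q0 UNIV "\<lambda>Q. ?L Q lam0"] LQ0 by simp
    show "?J \<le> (INF Q. ?L Q lam0)" by (rule INF_greatest) (rule F1)
  qed
  have SI: "(SUP l\<in>nonneg_multipliers. INF Q. ?L Q l) = ?J"
  proof (rule antisym)
    show "(SUP l\<in>nonneg_multipliers. INF Q. ?L Q l) \<le> ?J"
    proof (rule SUP_least)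
      fix l :: "'s \<Rightarrow> 'a \<Rightarrow> real" assume "l \<in> nonneg_multipliers"
      show "(INF Q. ?L Q l) \<le> ?J" using INF_lower[of Q0 UNIV "\<lambda>Q. ?L Q l"] LQ0 by simp
    qed
    show "?J \<le> (SUP l\<in>nonneg_multipliers. INF Q. ?L Q l)"
      using SUP_upper[OF lam0, of "\<lambda>l. INF Q. ?L Q l"] I0 by simp
  qed
  have A: "\<exists>Q0. (SUP l\<in>nonneg_multipliers. ?L Q0 l) = (INF Q. SUP l\<in>nonneg_multipliers. ?L Q l)"
    by (rule exI[of _ Q0]) (simp only: S0 IS)
  have B: "\<exists>l0\<in>nonneg_multipliers. (INF Q. ?L Q l0) = (SUP l\<in>(nonneg_multipliers :: ('s \<Rightarrow> 'a \<Rightarrow> real) set). INF Q. ?L Q l)"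
    by (rule bexI[OF _ lam0]) (simp only: I0 SI)
  show ?thesis by (intro conjI) (fact A, fact B, fact IS, fact SI)
qed


end
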